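(* For complex parameters $\alpha,a,b,c,\beta,\gamma$ with $\max\bigl\{\bigl|\alpha \beta abc/q^2\bigr|, \bigl|\alpha \gamma abc/q^2\bigr|\bigr\}<1$, we have \begin{align*} &\sum_{n=0}^\infty \frac{\bigl(1-\alpha q^{2n}\bigr)(\alpha, q/c; q)_n (c/q)^n}{(1-\alpha)(q, \alpha c; q)_n}\, {}_4 \phi_3 \biggl({{q^{-n}, \alpha q^n, \alpha \beta ab/q, \alpha \gamma ab/q}\atop{\alpha a, \alpha b,\alpha \beta \gamma ab/q}}; q, q\biggr)\\ &\qquad=\frac{\bigl(q\alpha, \alpha ac/q, \alpha bc/q, \alpha \beta ab/q, \alpha \gamma ab/q, \alpha \beta \gamma abc/q^2; q\bigr)_\infty}{\bigl(\alpha a, \alpha b, \alpha c, \alpha \beta abc/q^2, \alpha \gamma abc/q^2, \alpha \beta \gamma ab/q; q \bigr)_\infty}. \end{align*}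
   Context: Throughout, $q$ is a complex number with $0<|q|<1$. For $x\in\mathbb{C}$, $(x;q)_\infty=\prod_{k=0}^\infty(1-xq^k)$ and, for an integer $n\ge 0$, $(x;q)_n=\prod_{k=0}^{n-1}(1-xq^k)$; also $(x_1,\dots,x_m;q)_n=(x_1;q)_n\cdots(x_m;q)_n$ for $n$ an integer or $\infty$. The basic hypergeometric series is ${}_r\phi_s\Bigl({{a_1,\dots,a_r}\atop{b_1,\dots,b_s}};q,z\Bigr)=\sum_{n=0}^\infty \frac{(a_1,\dots,a_r;q)_n}{(q,b_1,\dots,b_s;q)_n}\bigl((-1)^nq^{n(n-1)/2}\bigr)^{1+s-r}z^n$. *)

theory Defs
  imports "HOL-Analysis.Analysis"
begin

definition qpoch :: "complex \<Rightarrow> complex \<Rightarrow> nat \<Rightarrow> complex" where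
  "qpoch x q n = (\<Prod>k<n. 1 - x * q ^ k)"

definition qpoch_inf :: "complex \<Rightarrow> complex \<Rightarrow> complex" where
  "qpoch_inf x q = (\<Prod>k. 1 - x * q ^ k)"

definition qpochs :: "complex list \<Rightarrow> complex \<Rightarrow> nat \<Rightarrow> complex" where
  "qpochs xs q n = prod_list (map (\<lambda>x. qpoch x q n) xs)"

definition qpochs_inf :: "complex list \<Rightarrow> complex \<Rightarrow> complex" where
  "qpochs_inf xs q = prod_list (map (\<lambda>x. qpoch_inf x q) xs)"

definition qphi :: "complex list \<Rightarrow> complex list \<Rightarrow> complex \<Rightarrow> complex \<Rightarrow> complex" where
  "qphi as bs q z = (\<Sum>n. qpochs as q n / qpochs (q # bs) q n
     * ((-1) ^ n * q ^ (n * (n - 1) div 2)) powi (1 + int (length bs) - int (length as)) * z ^ n)"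

end

theory Submission
  imports Defs "HOL-Complex_Analysis.Complex_Analysis"
begin

lemma qpoch_0 [simp]: "qpoch x q 0 = 1"
  by (simp add: qpoch_def)

lemma qpoch_Suc: "qpoch x q (Suc n) = qpoch x q n * (1 - x * q ^ n)"
  by (simp add: qpoch_def)

lemma qpoch_add: "qpoch x q (m + n) = qpoch x q m * qpoch (x * q ^ m) q n"
proof (induction n)
  case 0 then show ?case by simp
next
  case (Suc n) then show ?case by (simp add: qpoch_Suc power_add mult_ac)
qed

locale qctx =
  fixes q :: complex
  assumes q0: "q \<noteq> 0" and q1: "norm q < 1"
begin

lemma nq_pos: "0 < norm q" using q0 by simp

lemma summable_nq: "summable (\<lambda>k. norm q ^ k)"
  using q1 by (simp add: summable_geometric)

lemma sum_nq: "(\<Sum>k. norm q ^ k) = 1 / (1 - norm q)"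
  using q1 suminf_geometric[of "norm q"] by simp

lemma conv: "convergent_prod (\<lambda>k. 1 - z * q ^ k)"
proof -
  have "summable (\<lambda>k. norm (z * q ^ k))"
    using summable_nq by (simp add: norm_mult norm_power summable_mult)
  then have "abs_convergent_prod (\<lambda>k. 1 + (- z * q ^ k))"
    by (intro summable_imp_abs_convergent_prod) simp
  then have "abs_convergent_prod (\<lambda>k. 1 - z * q ^ k)" by simp
  then show ?thesis by (rule abs_convergent_prod_imp_convergent_prod)
qed

lemma tendsto_P: "(\<lambda>N. qpoch z q N) \<longlonglongrightarrow> qpoch_inf z q"
proof -
  have "(\<lambda>n. \<Prod>i\<le>n. 1 - z * q ^ i) \<longlonglongrightarrow> qpoch_inf z q"
    unfolding qpoch_inf_def by (rule convergent_prod_LIMSEQ[OF conv])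
  then show ?thesis unfolding qpoch_def using LIMSEQ_lessThan_iff_atMost by blast
qed

lemma P_split: "qpoch_inf z q = qpoch z q n * qpoch_inf (z * q ^ n) q"
proof -
  have "(\<lambda>N. qpoch z q (n + N)) \<longlonglongrightarrow> qpoch_inf z q"
    using LIMSEQ_ignore_initial_segment[OF tendsto_P[of z], of n] by (simp add: add.commute)
  moreover have "(\<lambda>N. qpoch z q (n + N)) \<longlonglongrightarrow> qpoch z q n * qpoch_inf (z * q ^ n) q"
    unfolding qpoch_add by (intro tendsto_mult tendsto_const tendsto_P)
  ultimately show ?thesis using LIMSEQ_unique by blast
qed

lemma P_nonzero: assumes "\<And>k. z * q ^ k \<noteq> 1" shows "qpoch_inf z q \<noteq> 0"
  unfolding qpoch_inf_def
  by (rule prodinf_nonzero[OF conv]) (use assms in \<open>auto simp: right_diff_distrib\<close>)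

lemma P_nonzero_small: assumes "norm z < 1" shows "qpoch_inf z q \<noteq> 0"
proof (rule P_nonzero)
  fix k
  have "norm (z * q ^ k) \<le> norm z"
    using q1 by (simp add: norm_mult norm_power mult_left_le power_le_one)
  then show "z * q ^ k \<noteq> 1" using assms by auto
qed

lemma P_zero: assumes "z * q ^ k = 1" shows "qpoch_inf z q = 0"
proof -
  have "qpoch z q (Suc k) = 0" by (simp add: qpoch_Suc assms)
  then show ?thesis using P_split[of z "Suc k"] by simp
qed

lemma norm_qpoch_le: "norm (qpoch z q n) \<le> exp (norm z / (1 - norm q))"
proof -
  have "norm (qpoch z q n) \<le> (\<Prod>k<n. 1 + norm z * norm q ^ k)"
    unfolding qpoch_def prod_norm[symmetric]
    by (intro prod_mono) (auto intro: order.trans[OF norm_triangle_ineq4] simp: norm_mult norm_power)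
  also have "\<dots> \<le> (\<Prod>k<n. exp (norm z * norm q ^ k))"
    by (intro prod_mono) (auto simp: add.commute exp_ge_add_one_self)
  also have "\<dots> = exp (\<Sum>k<n. norm z * norm q ^ k)"
    by (simp add: exp_sum)
  also have "(\<Sum>k<n. norm z * norm q ^ k) \<le> (\<Sum>k. norm z * norm q ^ k)"
    by (intro sum_le_suminf summable_mult summable_nq) auto
  also have "(\<Sum>k. norm z * norm q ^ k) = norm z / (1 - norm q)"
    using suminf_mult[OF summable_nq, of "norm z"] sum_nq by simp
  finally show ?thesis by simp
qed

lemma norm_P_le: "norm (qpoch_inf z q) \<le> exp (norm z / (1 - norm q))"
proof -
  have "(\<lambda>N. norm (qpoch z q N)) \<longlonglongrightarrow> norm (qpoch_inf z q)"
    by (intro tendsto_norm tendsto_P)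
  then show ?thesis
    by (rule LIMSEQ_le_const2) (auto intro: norm_qpoch_le)
qed

lemma P_uniform: "uniform_limit (cball 0 R) (\<lambda>N z. qpoch z q N) (\<lambda>z. qpoch_inf z q) sequentially"
proof -
  have uc: "uniformly_convergent_on (cball 0 R) (\<lambda>N z. \<Prod>k<N. 1 + (- z * q ^ k))"
  proof (rule uniformly_convergent_on_prod)
    show "continuous_on (cball 0 R) (\<lambda>z. - z * q ^ k)" for k by (intro continuous_intros)
    show "compact (cball (0::complex) R)" by simp
    have "uniform_limit (cball 0 R) (\<lambda>N z. \<Sum>k<N. norm (- z * q ^ k)) (\<lambda>z. \<Sum>k. norm (- z * q ^ k)) sequentially"
    proof (rule Weierstrass_m_test[where M = "\<lambda>k. abs R * norm q ^ k"])
      fix k and z :: complex assume "z \<in> cball 0 R"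
      then have "norm z \<le> abs R" by simp
      then show "norm (norm (- z * q ^ k)) \<le> abs R * norm q ^ k"
        by (simp add: norm_mult norm_power mult_right_mono)
    next
      show "summable (\<lambda>k. abs R * norm q ^ k)"
        using summable_nq by (simp add: summable_mult)
    qed
    then show "uniformly_convergent_on (cball 0 R) (\<lambda>N z. \<Sum>k<N. norm (- z * q ^ k))"
      unfolding uniformly_convergent_on_def by blast
  qed
  then obtain g where g: "uniform_limit (cball 0 R) (\<lambda>N z. qpoch z q N) g sequentially"
    unfolding uniformly_convergent_on_def qpoch_def by auto
  have "g z = qpoch_inf z q" if "z \<in> cball 0 R" for z
    using tendsto_uniform_limitI[OF g that] tendsto_P LIMSEQ_unique by blast
  with g show ?thesis using uniform_limit_cong'[of "cball 0 R" "\<lambda>N z. qpoch z q N" "\<lambda>N z. qpoch z q N" g "\<lambda>z. qpoch_inf z q"] by simp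
qed

lemma P_holo: "(\<lambda>z. qpoch_inf z q) holomorphic_on ball 0 R"
  and P_cont_cball: "continuous_on (cball 0 R) (\<lambda>z. qpoch_inf z q)"
proof -
  have "eventually (\<lambda>N. continuous_on (cball 0 R) (\<lambda>z. qpoch z q N) \<and> (\<lambda>z. qpoch z q N) holomorphic_on ball 0 R) sequentially"
    unfolding qpoch_def by (intro always_eventually allI conjI continuous_intros holomorphic_intros)
  from holomorphic_uniform_limit[OF this P_uniform trivial_limit_sequentially]
  show "(\<lambda>z. qpoch_inf z q) holomorphic_on ball 0 R" "continuous_on (cball 0 R) (\<lambda>z. qpoch_inf z q)"
    by blast+
qed

lemma P_holo_UNIV: "(\<lambda>z. qpoch_inf z q) holomorphic_on UNIV"
proof -
  have "(\<lambda>z. qpoch_inf z q) field_differentiable (at z)" for z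
    by (rule holomorphic_on_imp_differentiable_at[OF P_holo[of "norm z + 1"]]) auto
  then show ?thesis unfolding holomorphic_on_def using field_differentiable_at_within by blast
qed

lemma P_holo_comp [holomorphic_intros]:
  assumes "f holomorphic_on S" shows "(\<lambda>z. qpoch_inf (f z) q) holomorphic_on S"
  using holomorphic_on_compose[OF assms holomorphic_on_subset[OF P_holo_UNIV subset_UNIV]]
  by (simp add: o_def)

lemma isCont_P: "isCont (\<lambda>z. qpoch_inf z q) z"
proof -
  have "continuous_on UNIV (\<lambda>z. qpoch_inf z q)"
    by (rule holomorphic_on_imp_continuous_on[OF P_holo_UNIV])
  then show ?thesis by (simp add: continuous_on_eq_continuous_at)
qed

lemma isCont_P_comp [continuous_intros]: "isCont f z \<Longrightarrow> isCont (\<lambda>x. qpoch_inf (f x) q) z"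
  by (rule isCont_o2[OF _ isCont_P])

end


lemma qpoch_zero_left [simp]: "qpoch 0 q n = 1"
  by (simp add: qpoch_def)

lemma qpoch_Suc_left: "qpoch x q (Suc n) = (1 - x) * qpoch (x * q) q n"
  using qpoch_add[of x q 1 n] by (simp add: qpoch_def)

definition phi :: "complex \<Rightarrow> nat \<Rightarrow> complex \<Rightarrow> complex" where
  "phi q n s = (\<Prod>i<n. s - q ^ i)"

definition gk :: "complex \<Rightarrow> complex \<Rightarrow> nat \<Rightarrow> nat \<Rightarrow> complex" where
  "gk q a n k = qpoch (inverse (q ^ n)) q k * qpoch (a * q ^ n) q k * q ^ k / qpoch q q k"

definition Tn :: "complex \<Rightarrow> complex \<Rightarrow> (nat \<Rightarrow> complex) \<Rightarrow> nat \<Rightarrow> complex" where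
  "Tn q a B n = (\<Sum>k\<le>n. gk q a n k * B k)"

definition an :: "complex \<Rightarrow> complex \<Rightarrow> nat \<Rightarrow> complex" where
  "an q a n = (1 - a * q ^ (2 * n)) * qpoch a q n / ((1 - a) * qpoch q q n)"

definition psi :: "complex \<Rightarrow> complex \<Rightarrow> nat \<Rightarrow> complex \<Rightarrow> complex" where
  "psi q a n s = phi q n s * qpoch_inf (a * q ^ Suc n * s) q"

definition tri :: "nat \<Rightarrow> nat" where "tri l = (\<Sum>p<l. p)"

lemma tri_Suc: "tri (Suc l) = tri l + l" by (simp add: tri_def)

lemma tri_0 [simp]: "tri 0 = 0" by (simp add: tri_def)

lemma tri_double: "2 * tri l + l = l * l"
  by (induction l) (auto simp: tri_Suc)

lemma phi_Suc: "phi q (Suc n) s = phi q n s * (s - q ^ n)"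
  by (simp add: phi_def)

lemma phi_zero: "m < l \<Longrightarrow> phi q l (q ^ m) = 0"
  unfolding phi_def by (intro prod_zero) auto

context qctx
begin

lemma qpow_ne1: "n > 0 \<Longrightarrow> q ^ n \<noteq> 1"
proof
  assume "n > 0" "q ^ n = 1"
  then have "norm q ^ n = 1" by (metis norm_one norm_power)
  moreover have "norm q ^ n < 1" using \<open>n > 0\<close> q1 by (simp add: power_less_one_iff)
  ultimately show False by simp
qed

lemma qpoch_q_nz: "qpoch q q n \<noteq> 0"
  unfolding qpoch_def using qpow_ne1[of "Suc _"] by (auto simp: power_Suc[symmetric] simp del: power_Suc)

lemma qpoch_neg_zero: "n < k \<Longrightarrow> qpoch (inverse (q ^ n)) q k = 0"
proof -
  assume "n < k"
  have "1 - inverse (q ^ n) * q ^ n = 0" using q0 by simp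
  then show ?thesis unfolding qpoch_def using \<open>n < k\<close>
    by (intro prod_zero) auto
qed

text \<open>q-Chu-Vandermonde, multiplied form\<close>

definition cvf :: "complex \<Rightarrow> complex \<Rightarrow> nat \<Rightarrow> nat \<Rightarrow> complex" where
  "cvf b c N i = qpoch (inverse (q ^ N)) q i * qpoch b q i * q ^ i * qpoch (c * q ^ i) q (N - i) / qpoch q q i"

lemma cvf_out: "N < i \<Longrightarrow> cvf b c N i = 0"
  by (simp add: cvf_def qpoch_neg_zero)

lemma cvf_0: "cvf b c N 0 = qpoch c q N"
  by (simp add: cvf_def)

lemma cvf_step:
  assumes "j \<le> N"
  shows "cvf b c (Suc N) (Suc j) = (inverse (q ^ Suc j) - c * q ^ N) * cvf b c N (Suc j)
           - (inverse (q ^ j) - b) * cvf b c N j"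
proof -
  define Q where "Q = q ^ j"
  define M where "M = q ^ N"
  define X where "X = qpoch (inverse (q ^ N)) q j"
  define Y where "Y = qpoch b q j"
  define W where "W = qpoch q q j"
  have Q0: "Q \<noteq> 0" "M \<noteq> 0" using q0 by (auto simp: Q_def M_def)
  have W0: "W \<noteq> 0" using qpoch_q_nz by (simp add: W_def)
  have W1: "1 - q * Q \<noteq> 0" using qpow_ne1[of "Suc j"] by (simp add: Q_def)
  have e1: "qpoch (inverse (q ^ Suc N)) q (Suc j) = (1 - inverse (q * M)) * X"
    unfolding qpoch_Suc_left X_def M_def using q0 by (simp add: field_simps)
  have e2: "qpoch (inverse (q ^ N)) q (Suc j) = X * (1 - Q / M)"
    by (simp add: qpoch_Suc X_def Q_def M_def field_simps)
  have e3: "qpoch b q (Suc j) = Y * (1 - b * Q)" by (simp add: qpoch_Suc Y_def Q_def)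
  have e4: "qpoch q q (Suc j) = W * (1 - q * Q)" by (simp add: qpoch_Suc W_def Q_def)
  have r1: "inverse (q ^ Suc j) = inverse (q * Q)" "q ^ N = M" "inverse (q ^ j) = inverse Q"
    by (simp_all add: Q_def M_def)
  show ?thesis
  proof (cases "j = N")
    case True
    have A: "cvf b c (Suc N) (Suc j) = (1 - inverse (q * M)) * X * (Y * (1 - b * Q)) * (q * Q) / (W * (1 - q * Q))"
      unfolding cvf_def e1 e3 e4 using True by (simp add: Q_def)
    have B: "cvf b c N (Suc j) = 0" using True by (simp add: cvf_out)
    have C: "cvf b c N j = X * Y * Q / W" using True by (simp add: cvf_def X_def Y_def W_def Q_def)
    have MQ: "M = Q" using True by (simp add: M_def Q_def)
    have "(1 - inverse (q * Q)) * X * (Y * (1 - b * Q)) * (q * Q) / (W * (1 - q * Q))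
          = (inverse (q * Q) - c * Q) * 0 - (inverse Q - b) * (X * Y * Q / W)"
      using Q0 W0 W1 q0 by (simp add: field_simps; simp add: algebra_simps)
    then show ?thesis unfolding A B C r1 MQ .
  next
    case False
    with assms have jN: "j < N" by simp
    define Z where "Z = qpoch (c * q ^ Suc j) q (N - Suc j)"
    have e5: "qpoch (c * q ^ Suc j) q (Suc N - Suc j) = Z * (1 - c * M)"
    proof -
      have "Suc N - Suc j = Suc (N - Suc j)" using jN by simp
      moreover have "c * q ^ Suc j * q ^ (N - Suc j) = c * M"
      proof -
        have "Suc j + (N - Suc j) = N" using jN by simp
        then have "q ^ Suc j * q ^ (N - Suc j) = M" unfolding M_def by (metis power_add)
        then show ?thesis by (simp add: mult.assoc)
      qed
      ultimately show ?thesis by (simp add: qpoch_Suc Z_def)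
    qed
    have e6: "qpoch (c * q ^ j) q (N - j) = (1 - c * Q) * Z"
    proof -
      have "N - j = Suc (N - Suc j)" using jN by simp
      then show ?thesis by (simp add: qpoch_Suc_left Z_def Q_def mult_ac)
    qed
    have A: "cvf b c (Suc N) (Suc j) = (1 - inverse (q * M)) * X * (Y * (1 - b * Q)) * (q * Q) * (Z * (1 - c * M)) / (W * (1 - q * Q))"
      unfolding cvf_def e1 e3 e4 e5 by (simp add: Q_def)
    have B: "cvf b c N (Suc j) = X * (1 - Q / M) * (Y * (1 - b * Q)) * (q * Q) * Z / (W * (1 - q * Q))"
      unfolding cvf_def e2 e3 e4 by (simp add: Q_def Z_def)
    have C: "cvf b c N j = X * Y * Q * ((1 - c * Q) * Z) / W"
      unfolding cvf_def e6[symmetric] by (simp add: X_def Y_def W_def Q_def)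
    have "(1 - inverse (q * M)) * X * (Y * (1 - b * Q)) * (q * Q) * (Z * (1 - c * M)) / (W * (1 - q * Q))
        = (inverse (q * Q) - c * M) * (X * (1 - Q / M) * (Y * (1 - b * Q)) * (q * Q) * Z / (W * (1 - q * Q)))
          - (inverse Q - b) * (X * Y * Q * ((1 - c * Q) * Z) / W)"
      using Q0 W0 W1 q0 by (simp add: field_simps; simp add: algebra_simps)
    then show ?thesis unfolding A B C r1 .
  qed
qed

lemma CV: "(\<Sum>i\<le>N. cvf b c N i) = (\<Prod>i<N. b - c * q ^ i)"
proof (induction N)
  case 0 then show ?case by (simp add: cvf_def)
next
  case (Suc N)
  define u where "u j = (inverse (q ^ j) - b) * cvf b c N j" for j
  have "(\<Sum>i\<le>Suc N. cvf b c (Suc N) i) = cvf b c (Suc N) 0 + (\<Sum>j\<le>N. cvf b c (Suc N) (Suc j))"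
    by (rule sum.atMost_Suc_shift)
  also have "(\<Sum>j\<le>N. cvf b c (Suc N) (Suc j)) = (\<Sum>j\<le>N. (u (Suc j) - u j) + (b - c * q ^ N) * cvf b c N (Suc j))"
    by (intro sum.cong refl) (simp add: cvf_step u_def algebra_simps)
  also have "\<dots> = (\<Sum>j\<le>N. u (Suc j) - u j) + (b - c * q ^ N) * (\<Sum>j\<le>N. cvf b c N (Suc j))"
    by (simp add: sum.distrib sum_distrib_left)
  also have "(\<Sum>j\<le>N. u (Suc j) - u j) = u (Suc N) - u 0"
    using sum_lessThan_telescope[of u "Suc N"] by (simp add: lessThan_Suc_atMost)
  also have "u (Suc N) = 0" by (simp add: u_def cvf_out)
  also have "(\<Sum>j\<le>N. cvf b c N (Suc j)) = (\<Sum>j\<le>N. cvf b c N j) - cvf b c N 0"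
  proof -
    have "(\<Sum>j\<le>Suc N. cvf b c N j) = cvf b c N 0 + (\<Sum>j\<le>N. cvf b c N (Suc j))"
      by (rule sum.atMost_Suc_shift)
    then show ?thesis by (simp add: cvf_out)
  qed
  finally show ?case using Suc.IH
    by (simp add: u_def cvf_0 qpoch_Suc algebra_simps)
qed


lemma phi_pow:
  assumes "l \<le> m"
  shows "phi q l (q ^ m) * qpoch q q (m - l) = (-1) ^ l * q ^ tri l * qpoch q q m"
  using assms
proof (induction l)
  case 0 then show ?case by (simp add: phi_def tri_def)
next
  case (Suc l)
  then have lm: "l < m" by simp
  have e1: "m - l = Suc (m - Suc l)" using lm by simp
  have e2: "qpoch q q (m - l) = qpoch q q (m - Suc l) * (1 - q ^ (m - l))"
    unfolding e1 qpoch_Suc by (simp add: e1)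
  have e3: "q ^ m = q ^ l * q ^ (m - l)" using lm by (simp add: power_add[symmetric])
  have "phi q (Suc l) (q ^ m) * qpoch q q (m - Suc l)
        = (- (q ^ l)) * (phi q l (q ^ m) * qpoch q q (m - l))"
    unfolding phi_Suc e2 by (subst (2) e3) (simp add: algebra_simps)
  also have "\<dots> = (-1) ^ Suc l * q ^ tri (Suc l) * qpoch q q m"
    using Suc.IH lm by (simp add: tri_Suc power_add)
  finally show ?case .
qed

lemma phi_node:
  "phi q l (q ^ (l + i)) * qpoch q q l * qpoch q q i = phi q l (q ^ l) * qpoch q q (l + i)"
proof -
  have a: "phi q l (q ^ (l + i)) * qpoch q q i = (-1) ^ l * q ^ tri l * qpoch q q (l + i)"
    using phi_pow[of l "l + i"] by simp
  have b: "phi q l (q ^ l) = (-1) ^ l * q ^ tri l * qpoch q q l"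
    using phi_pow[of l l] by simp
  show ?thesis using a b by (simp add: algebra_simps)
qed

lemma qpoch_inv_diag: "qpoch (inverse (q ^ l)) q l = phi q l (q ^ l) / q ^ (l * l)"
proof -
  have "qpoch (inverse (q ^ l)) q l = (\<Prod>p<l. (q ^ l - q ^ p) / q ^ l)"
    unfolding qpoch_def using q0 by (intro prod.cong refl) (simp add: field_simps)
  also have "\<dots> = phi q l (q ^ l) / q ^ (l * l)"
    by (simp add: prod_dividef phi_def power_mult)
  finally show ?thesis .
qed

lemma diag_identity: "phi q l (q ^ l) * q ^ l * qpoch (inverse (q ^ l)) q l = qpoch q q l ^ 2"
proof -
  have b: "phi q l (q ^ l) = (-1) ^ l * q ^ tri l * qpoch q q l"
    using phi_pow[of l l] by simp
  have t: "q ^ (2 * tri l) * q ^ l = q ^ (l * l)"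
    by (simp add: power_add[symmetric] tri_double)
  have "phi q l (q ^ l) * q ^ l * qpoch (inverse (q ^ l)) q l = phi q l (q ^ l) ^ 2 * q ^ l / q ^ (l * l)"
    by (simp add: qpoch_inv_diag power2_eq_square)
  also have "\<dots> = qpoch q q l ^ 2 * (q ^ (2 * tri l) * q ^ l) / q ^ (l * l)"
    by (simp add: b power_mult_distrib power_mult[symmetric] algebra_simps)
  also have "\<dots> = qpoch q q l ^ 2"
    using q0 by (simp add: t)
  finally show ?thesis .
qed


lemma sum_shift_from:
  fixes l n :: nat
  assumes "l \<le> n" and "\<And>k. k < l \<Longrightarrow> f k = 0"
  shows "(\<Sum>k\<le>n. f k) = (\<Sum>i\<le>n - l. f (l + i))"
proof -
  have "{..n} = {..<l} \<union> {l..n}" using assms(1) by auto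
  then have "(\<Sum>k\<le>n. f k) = (\<Sum>k<l. f k) + (\<Sum>k=l..n. f k)"
    by (simp add: sum.union_disjoint ivl_disj_int)
  also have "(\<Sum>k<l. f k) = 0" using assms(2) by simp
  also have "(\<Sum>k=l..n. f k) = (\<Sum>i=0..n - l. f (i + l))"
    using sum.shift_bounds_cl_nat_ivl[of f 0 l "n - l"] assms(1) by simp
  finally show ?thesis by (simp add: atMost_atLeast0 add.commute)
qed

lemma gk_phi_sum:
  assumes "l \<le> n"
  shows "(\<Sum>k\<le>n. gk q a n k * phi q l (q ^ k) * h k) =
    phi q l (q ^ l) * q ^ l / qpoch q q l * qpoch (inverse (q ^ n)) q l * qpoch (a * q ^ n) q l *
    (\<Sum>i\<le>n - l. qpoch (inverse (q ^ (n - l))) q i * qpoch (a * q ^ (n + l)) q i * q ^ i / qpoch q q i * h (l + i))"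
proof -
  have "(\<Sum>k\<le>n. gk q a n k * phi q l (q ^ k) * h k) = (\<Sum>i\<le>n - l. gk q a n (l + i) * phi q l (q ^ (l + i)) * h (l + i))"
    by (rule sum_shift_from[OF assms]) (simp add: phi_zero)
  also have "\<dots> = (\<Sum>i\<le>n - l. phi q l (q ^ l) * q ^ l / qpoch q q l * qpoch (inverse (q ^ n)) q l * qpoch (a * q ^ n) q l *
      (qpoch (inverse (q ^ (n - l))) q i * qpoch (a * q ^ (n + l)) q i * q ^ i / qpoch q q i * h (l + i)))"
  proof (intro sum.cong refl)
    fix i
    have e1: "inverse (q ^ n) * q ^ l = inverse (q ^ (n - l))"
      using assms q0 by (simp add: power_diff field_simps)
    have e2: "phi q l (q ^ (l + i)) = phi q l (q ^ l) * qpoch q q (l + i) / (qpoch q q l * qpoch q q i)"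
      using phi_node[of l i] qpoch_q_nz by (simp add: field_simps)
    have e3: "qpoch (inverse (q ^ n)) q (l + i) = qpoch (inverse (q ^ n)) q l * qpoch (inverse (q ^ (n - l))) q i"
      by (simp add: qpoch_add e1)
    have e4: "qpoch (a * q ^ n) q (l + i) = qpoch (a * q ^ n) q l * qpoch (a * q ^ (n + l)) q i"
      by (simp add: qpoch_add power_add mult.assoc)
    show "gk q a n (l + i) * phi q l (q ^ (l + i)) * h (l + i) = phi q l (q ^ l) * q ^ l / qpoch q q l * qpoch (inverse (q ^ n)) q l * qpoch (a * q ^ n) q l *
      (qpoch (inverse (q ^ (n - l))) q i * qpoch (a * q ^ (n + l)) q i * q ^ i / qpoch q q i * h (l + i))"
      unfolding gk_def e2 e3 e4 using qpoch_q_nz[of "l + i"] qpoch_q_nz[of l] qpoch_q_nz[of i]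
      by (simp add: field_simps power_add)
  qed
  also have "\<dots> = phi q l (q ^ l) * q ^ l / qpoch q q l * qpoch (inverse (q ^ n)) q l * qpoch (a * q ^ n) q l *
    (\<Sum>i\<le>n - l. qpoch (inverse (q ^ (n - l))) q i * qpoch (a * q ^ (n + l)) q i * q ^ i / qpoch q q i * h (l + i))"
    by (simp add: sum_distrib_left)
  finally show ?thesis .
qed

lemma G_closed:
  "(\<Sum>k\<le>n. gk q a n k * phi q l (q ^ k)) = (if l \<le> n then
     phi q l (q ^ l) * q ^ l / qpoch q q l * qpoch (inverse (q ^ n)) q l * qpoch (a * q ^ n) q l * (a * q ^ (n + l)) ^ (n - l)
     else 0)"
proof (cases "l \<le> n")
  case True
  have "(\<Sum>k\<le>n. gk q a n k * phi q l (q ^ k)) = (\<Sum>k\<le>n. gk q a n k * phi q l (q ^ k) * 1)" by simp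
  also have "\<dots> = phi q l (q ^ l) * q ^ l / qpoch q q l * qpoch (inverse (q ^ n)) q l * qpoch (a * q ^ n) q l *
    (\<Sum>i\<le>n - l. cvf (a * q ^ (n + l)) 0 (n - l) i)"
    unfolding gk_phi_sum[OF True] by (simp add: cvf_def)
  also have "(\<Sum>i\<le>n - l. cvf (a * q ^ (n + l)) 0 (n - l) i) = (a * q ^ (n + l)) ^ (n - l)"
    unfolding CV by simp
  finally show ?thesis using True by simp
next
  case False
  then show ?thesis by (simp add: phi_zero)
qed

definition good :: "complex \<Rightarrow> bool" where "good a \<longleftrightarrow> (\<forall>j>0. a * q ^ j \<noteq> 1)"

lemma good_qpoch_nz:
  assumes "good a" "0 < m" shows "qpoch (a * q ^ m) q n \<noteq> 0"
proof -
  have "1 - a * q ^ m * q ^ k \<noteq> 0" for k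
    using assms(1)[unfolded good_def, rule_format, of "m + k"] assms(2) by (simp add: power_add mult.assoc)
  then show ?thesis unfolding qpoch_def by (simp add: prod_zero_iff)
qed

lemma good_qpoch_nz1: "good a \<Longrightarrow> qpoch (a * q) q n \<noteq> 0"
  using good_qpoch_nz[of a 1 n] by simp

lemma CV_div:
  assumes "qpoch c q N \<noteq> 0"
  shows "(\<Sum>i\<le>N. qpoch (inverse (q ^ N)) q i * qpoch b q i * q ^ i / qpoch q q i / qpoch c q i)
        = (\<Prod>i<N. b - c * q ^ i) / qpoch c q N"
proof -
  have "(\<Sum>i\<le>N. qpoch (inverse (q ^ N)) q i * qpoch b q i * q ^ i / qpoch q q i / qpoch c q i)
      = (\<Sum>i\<le>N. cvf b c N i / qpoch c q N)"
  proof (intro sum.cong refl)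
    fix i assume "i \<in> {..N}"
    then have "qpoch c q N = qpoch c q i * qpoch (c * q ^ i) q (N - i)"
      using qpoch_add[of c q i "N - i"] by simp
    then show "qpoch (inverse (q ^ N)) q i * qpoch b q i * q ^ i / qpoch q q i / qpoch c q i = cvf b c N i / qpoch c q N"
      using assms by (auto simp: cvf_def field_simps)
  qed
  also have "\<dots> = (\<Prod>i<N. b - c * q ^ i) / qpoch c q N"
    by (simp add: sum_divide_distrib[symmetric] CV)
  finally show ?thesis .
qed

lemma orth:
  assumes g: "good a" and a1: "a \<noteq> 1" and ln: "l \<le> n"
  shows "an q a l * (\<Sum>k\<le>n. gk q a n k * phi q l (q ^ k) * (1 / qpoch (a * q) q (l + k))) = (if n = l then 1 else 0)"
proof -
  define N where "N = n - l"
  define c where "c = a * q ^ (2 * l + 1)"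
  have c0: "qpoch c q N \<noteq> 0" unfolding c_def by (rule good_qpoch_nz[OF g]) simp
  have split: "qpoch (a * q) q (l + (l + i)) = qpoch (a * q) q (2 * l) * qpoch c q i" for i
    using qpoch_add[of "a * q" q "2 * l" i] by (simp add: c_def mult_2 add.assoc power_add mult.assoc)
  have s: "(\<Sum>i\<le>N. qpoch (inverse (q ^ N)) q i * qpoch (a * q ^ (n + l)) q i * q ^ i / qpoch q q i *
            (1 / qpoch (a * q) q (l + (l + i)))) =
        (\<Prod>i<N. a * q ^ (n + l) - c * q ^ i) / qpoch c q N / qpoch (a * q) q (2 * l)"
    unfolding split CV_div[OF c0, symmetric] sum_divide_distrib
    by (intro sum.cong refl) (simp add: field_simps)
  have lhs: "an q a l * (\<Sum>k\<le>n. gk q a n k * phi q l (q ^ k) * (1 / qpoch (a * q) q (l + k)))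
     = an q a l * (phi q l (q ^ l) * q ^ l / qpoch q q l * qpoch (inverse (q ^ n)) q l * qpoch (a * q ^ n) q l *
       ((\<Prod>i<N. a * q ^ (n + l) - c * q ^ i) / qpoch c q N / qpoch (a * q) q (2 * l)))"
    unfolding gk_phi_sum[OF ln] s[unfolded N_def] N_def by simp
  show ?thesis
  proof (cases "n = l")
    case False
    then have "N > 0" using ln by (simp add: N_def)
    have "2 * l + 1 + (N - 1) = n + l" using \<open>N > 0\<close> ln by (simp add: N_def)
    then have "a * q ^ (n + l) - c * q ^ (N - 1) = 0"
      unfolding c_def by (metis mult.assoc power_add right_minus_eq)
    moreover have "N - 1 \<in> {..<N}" using \<open>N > 0\<close> by simp
    ultimately have "(\<Prod>i<N. a * q ^ (n + l) - c * q ^ i) = 0"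
      by (intro prod_zero) auto
    then show ?thesis using lhs False by simp
  next
    case True
    then have N0: "N = 0" by (simp add: N_def)
    have d: "phi q l (q ^ l) * q ^ l * qpoch (inverse (q ^ l)) q l = qpoch q q l ^ 2"
      by (rule diag_identity)
    have e: "qpoch a q l * qpoch (a * q ^ l) q l = qpoch a q (2 * l)"
      using qpoch_add[of a q l l] by (simp add: mult_2)
    have f: "(1 - a * q ^ (2 * l)) * qpoch a q (2 * l) = (1 - a) * qpoch (a * q) q (2 * l)"
    proof (cases l)
      case 0 then show ?thesis by simp
    next
      case (Suc m)
      then obtain m' where m': "2 * l = Suc m'" by simp
      have h1: "qpoch a q (Suc m') = (1 - a) * qpoch (a * q) q m'" by (rule qpoch_Suc_left)
      have h2: "qpoch (a * q) q (Suc m') = qpoch (a * q) q m' * (1 - a * q * q ^ m')" by (rule qpoch_Suc)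
      have h3: "a * q ^ Suc m' = a * q * q ^ m'" by simp
      show ?thesis unfolding m' h1 h2 h3 by (simp add: algebra_simps)
    qed
    have nz: "qpoch (a * q) q (2 * l) \<noteq> 0" "1 - a \<noteq> 0" "qpoch q q l \<noteq> 0"
      using good_qpoch_nz1[OF g] a1 qpoch_q_nz by auto
    have "an q a l * (phi q l (q ^ l) * q ^ l / qpoch q q l * qpoch (inverse (q ^ l)) q l * qpoch (a * q ^ l) q l /
       qpoch (a * q) q (2 * l)) = 1"
    proof -
      have "an q a l * (phi q l (q ^ l) * q ^ l / qpoch q q l * qpoch (inverse (q ^ l)) q l * qpoch (a * q ^ l) q l /
       qpoch (a * q) q (2 * l)) = ((1 - a * q ^ (2 * l)) * (qpoch a q l * qpoch (a * q ^ l) q l)) *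
          (phi q l (q ^ l) * q ^ l * qpoch (inverse (q ^ l)) q l) / ((1 - a) * qpoch (a * q) q (2 * l) * (qpoch q q l * qpoch q q l))"
        unfolding an_def by (simp add: field_simps)
      also have "\<dots> = ((1 - a) * qpoch (a * q) q (2 * l)) * (qpoch q q l * qpoch q q l) / ((1 - a) * qpoch (a * q) q (2 * l) * (qpoch q q l * qpoch q q l))"
        unfolding d e f power2_eq_square by simp
      also have "\<dots> = 1" using nz by simp
      finally show ?thesis .
    qed
    then show ?thesis using lhs True N0 by simp
  qed
qed


lemma gk_diag_nz: assumes "good a" shows "gk q a n n \<noteq> 0"
proof -
  have "1 - inverse (q ^ n) * q ^ p \<noteq> 0" if "p < n" for p
  proof
    assume "1 - inverse (q ^ n) * q ^ p = 0"
    then have "q ^ p = q ^ n" using q0 by (simp add: field_simps)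
    moreover have "q ^ p * q ^ (n - p) = q ^ n"
      using that by (metis le_add_diff_inverse less_imp_le power_add)
    ultimately have "q ^ n * q ^ (n - p) = q ^ n * 1" by simp
    then have "q ^ (n - p) = 1" using q0 by simp
    then show False using qpow_ne1[of "n - p"] that by simp
  qed
  then have a: "qpoch (inverse (q ^ n)) q n \<noteq> 0" unfolding qpoch_def by (simp add: prod_zero_iff)
  have b: "qpoch (a * q ^ n) q n \<noteq> 0"
    using good_qpoch_nz[OF assms, of n n] by (cases "n = 0") auto
  show ?thesis unfolding gk_def using a b q0 qpoch_q_nz by simp
qed

lemma T_unique:
  assumes "\<And>n. Tn q a X n = Tn q a Y n" and "\<And>n. gk q a n n \<noteq> 0"
  shows "X k = Y k"
proof (induction k rule: less_induct)
  case (less k)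
  have tx: "Tn q a X k = (\<Sum>j<k. gk q a k j * X j) + gk q a k k * X k"
    by (simp add: Tn_def lessThan_Suc_atMost[symmetric])
  have ty: "Tn q a Y k = (\<Sum>j<k. gk q a k j * Y j) + gk q a k k * Y k"
    by (simp add: Tn_def lessThan_Suc_atMost[symmetric])
  have s: "(\<Sum>j<k. gk q a k j * X j) = (\<Sum>j<k. gk q a k j * Y j)"
    using less.IH by simp
  have "(\<Sum>j<k. gk q a k j * X j) + gk q a k k * X k = (\<Sum>j<k. gk q a k j * Y j) + gk q a k k * Y k"
    using assms(1)[of k] tx ty by argo
  then have "gk q a k k * X k = gk q a k k * Y k" unfolding s by simp
  then show ?case using assms(2)[of k] by simp
qed

lemma S1_div:
  assumes g: "good a" and a1: "a \<noteq> 1"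
  shows "(\<Sum>n\<le>k. an q a n * Tn q a B n * phi q n (q ^ k) / qpoch (a * q) q (n + k)) = B k"
proof -
  define Bp where "Bp k = (\<Sum>n\<le>k. an q a n * Tn q a B n * phi q n (q ^ k) / qpoch (a * q) q (n + k))" for k
  have "Tn q a Bp n = Tn q a B n" for n
  proof -
    have "Tn q a Bp n = (\<Sum>k\<le>n. \<Sum>l\<le>n. gk q a n k * (an q a l * Tn q a B l * phi q l (q ^ k) / qpoch (a * q) q (l + k)))"
      unfolding Tn_def[of q a Bp] Bp_def sum_distrib_left
    proof (rule sum.cong[OF refl])
      fix k assume k: "k \<in> {..n}"
      show "(\<Sum>l\<le>k. gk q a n k * (an q a l * Tn q a B l * phi q l (q ^ k) / qpoch (a * q) q (l + k))) =
            (\<Sum>l\<le>n. gk q a n k * (an q a l * Tn q a B l * phi q l (q ^ k) / qpoch (a * q) q (l + k)))"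
        by (rule sum.mono_neutral_left) (use k in \<open>auto simp: phi_zero\<close>)
    qed
    also have "\<dots> = (\<Sum>l\<le>n. Tn q a B l * (an q a l * (\<Sum>k\<le>n. gk q a n k * phi q l (q ^ k) * (1 / qpoch (a * q) q (l + k)))))"
      by (subst sum.swap) (simp add: sum_distrib_left mult_ac)
    also have "\<dots> = (\<Sum>l\<le>n. Tn q a B l * (if n = l then 1 else 0))"
    proof (rule sum.cong[OF refl])
      fix l assume "l \<in> {..n}"
      then have "l \<le> n" by simp
      from orth[OF g a1 this]
      show "Tn q a B l * (an q a l * (\<Sum>k\<le>n. gk q a n k * phi q l (q ^ k) * (1 / qpoch (a * q) q (l + k)))) =
            Tn q a B l * (if n = l then 1 else 0)" by simp
    qed
    also have "\<dots> = Tn q a B n"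
      by (simp add: if_distrib[of "\<lambda>x. Tn q a B _ * x"] sum.delta' cong: if_cong)
    finally show ?thesis .
  qed
  then have "Bp k = B k" by (rule T_unique) (rule gk_diag_nz[OF g])
  then show ?thesis by (simp add: Bp_def)
qed

lemma psi_node:
  "psi q a n (q ^ k) * qpoch (a * q) q (n + k) = phi q n (q ^ k) * qpoch_inf (a * q) q"
proof -
  have sp: "qpoch_inf (a * q) q = qpoch (a * q) q (n + k) * qpoch_inf (a * q * q ^ (n + k)) q"
    by (rule P_split)
  have e: "a * q ^ Suc n * q ^ k = a * q * q ^ (n + k)" by (simp add: power_add mult_ac)
  show ?thesis unfolding psi_def e by (subst sp) (simp add: mult_ac)
qed

lemma S1_good:
  assumes g: "good a" and a1: "a \<noteq> 1"
  shows "(\<Sum>n\<le>k. an q a n * Tn q a B n * psi q a n (q ^ k)) = qpoch_inf (a * q) q * B k"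
proof -
  have "(\<Sum>n\<le>k. an q a n * Tn q a B n * psi q a n (q ^ k)) =
        (\<Sum>n\<le>k. qpoch_inf (a * q) q * (an q a n * Tn q a B n * phi q n (q ^ k) / qpoch (a * q) q (n + k)))"
  proof (intro sum.cong refl)
    fix n
    have "psi q a n (q ^ k) = phi q n (q ^ k) * qpoch_inf (a * q) q / qpoch (a * q) q (n + k)"
      using psi_node[of a n k] good_qpoch_nz1[OF g] by (simp add: field_simps)
    then show "an q a n * Tn q a B n * psi q a n (q ^ k) =
        qpoch_inf (a * q) q * (an q a n * Tn q a B n * phi q n (q ^ k) / qpoch (a * q) q (n + k))"
      by simp
  qed
  also have "\<dots> = qpoch_inf (a * q) q * (\<Sum>n\<le>k. an q a n * Tn q a B n * phi q n (q ^ k) / qpoch (a * q) q (n + k))"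
    by (rule sum_distrib_left[symmetric])
  also have "\<dots> = qpoch_inf (a * q) q * B k"
    by (simp only: S1_div[OF g a1, of B k])
  finally show ?thesis .
qed

end


fun cc :: "complex \<Rightarrow> nat \<Rightarrow> nat \<Rightarrow> complex" where
  "cc q 0 i = (if i = 0 then 1 else 0)"
| "cc q (Suc j) i = (if i = 0 then 0 else cc q j (i - 1)) + q ^ i * cc q j i"

lemma cc_zero: "j < i \<Longrightarrow> cc q j i = 0"
  by (induction j arbitrary: i) auto

lemma mono_exp: "s ^ j = (\<Sum>i\<le>j. cc q j i * phi q i s)"
proof (induction j)
  case 0 then show ?case by (simp add: phi_def)
next
  case (Suc j)
  have "s ^ Suc j = (\<Sum>i\<le>j. cc q j i * (s * phi q i s))"
    by (simp add: Suc sum_distrib_left mult_ac)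
  also have "\<dots> = (\<Sum>i\<le>j. cc q j i * phi q (Suc i) s) + (\<Sum>i\<le>j. q ^ i * cc q j i * phi q i s)"
    by (simp add: sum.distrib[symmetric] phi_Suc algebra_simps)
  also have "(\<Sum>i\<le>j. q ^ i * cc q j i * phi q i s) = (\<Sum>i\<le>Suc j. q ^ i * cc q j i * phi q i s)"
    by (simp add: cc_zero)
  also have "(\<Sum>i\<le>j. cc q j i * phi q (Suc i) s) = (\<Sum>i\<le>Suc j. (if i = 0 then 0 else cc q j (i - 1)) * phi q i s)"
    by (subst sum.atMost_Suc_shift) simp
  finally show ?case by (simp add: sum.distrib[symmetric] algebra_simps)
qed

context qctx
begin

definition rq :: "nat \<Rightarrow> real" where "rq i = (\<Prod>l<i. 1 - norm q ^ Suc l)"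

definition LQ :: real where "LQ = exp (- (1 / (1 - norm q) ^ 2))"

lemma nq_lt1: "norm q < 1" by (rule q1)

lemma nqp_lt1 [simp]: "norm q * norm q ^ l < 1"
  using power_Suc_less_one[of "norm q" l] q1 q0 by simp

lemma nqp_le1 [simp]: "norm q * norm q ^ l \<le> 1"
  using nqp_lt1[of l] by linarith

lemma nqp_le1' [simp]: "norm q ^ l \<le> 1"
  using q1 by (simp add: power_le_one)

lemma one_minus_ge_exp:
  fixes x :: real assumes "0 \<le> x" "x < 1"
  shows "exp (- (x / (1 - x))) \<le> 1 - x"
proof -
  have "1 + x / (1 - x) \<le> exp (x / (1 - x))" by (rule exp_ge_add_one_self)
  moreover have "1 + x / (1 - x) = 1 / (1 - x)" using assms by (simp add: field_simps)
  ultimately have "1 / (1 - x) \<le> exp (x / (1 - x))" by simp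
  then have "1 \<le> exp (x / (1 - x)) * (1 - x)" using assms by (simp add: field_simps)
  then show ?thesis by (simp add: exp_minus field_simps)
qed

lemma rq_pos: "0 < rq i"
  unfolding rq_def using q1 by (intro prod_pos) (simp add: power_less_one_iff nq_pos)

lemma rq_Suc: "rq (Suc i) = rq i * (1 - norm q ^ Suc i)"
  by (simp add: rq_def)

lemma LQ_pos: "0 < LQ" by (simp add: LQ_def)

lemma rq_ge: "LQ \<le> rq i"
proof -
  have A: "(\<Prod>l<i. exp (- (norm q ^ Suc l / (1 - norm q)))) \<le> rq i"
    unfolding rq_def
  proof (intro prod_mono conjI)
    fix l
    have a: "norm q ^ Suc l \<le> norm q" using q1 by (simp add: power_le_one mult_left_le)
    have b: "norm q ^ Suc l < 1" using q1 by (simp add: power_less_one_iff)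
    have "exp (- (norm q ^ Suc l / (1 - norm q))) \<le> exp (- (norm q ^ Suc l / (1 - norm q ^ Suc l)))"
      using a b q1 by (auto intro!: divide_left_mono mult_pos_pos)
    also have "\<dots> \<le> 1 - norm q ^ Suc l" by (rule one_minus_ge_exp) (use b in auto)
    finally show "exp (- (norm q ^ Suc l / (1 - norm q))) \<le> 1 - norm q ^ Suc l" .
  qed auto
  have B: "(\<Prod>l<i. exp (- (norm q ^ Suc l / (1 - norm q)))) = exp (- ((\<Sum>l<i. norm q ^ Suc l) / (1 - norm q)))"
    by (simp add: exp_sum[symmetric] sum_negf sum_divide_distrib)
  have C: "(\<Sum>l<i. norm q ^ Suc l) \<le> 1 / (1 - norm q)"
  proof -
    have "(\<Sum>l<Suc i. norm q ^ l) = 1 + (\<Sum>l<i. norm q ^ Suc l)"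
      by (simp only: sum.lessThan_Suc_shift) simp
    then have "(\<Sum>l<i. norm q ^ Suc l) \<le> (\<Sum>l<Suc i. norm q ^ l)" by simp
    also have "\<dots> \<le> (\<Sum>l. norm q ^ l)" by (intro sum_le_suminf summable_nq) auto
    finally show ?thesis using sum_nq by linarith
  qed
  have "(\<Sum>l<i. norm q ^ Suc l) / (1 - norm q) \<le> (1 / (1 - norm q)) / (1 - norm q)"
    using C by (rule divide_right_mono) (use q1 in auto)
  also have "(1 / (1 - norm q)) / (1 - norm q) = 1 / (1 - norm q) ^ 2"
    by (simp add: power2_eq_square)
  finally have D: "exp (- (1 / (1 - norm q) ^ 2)) \<le> exp (- ((\<Sum>l<i. norm q ^ Suc l) / (1 - norm q)))"
    by simp
  show ?thesis unfolding LQ_def using A B D by linarith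
qed

lemma norm_qpoch_q_ge: "rq i \<le> norm (qpoch q q i)"
  unfolding rq_def qpoch_def prod_norm[symmetric]
proof (intro prod_mono conjI)
  fix l
  show "0 \<le> 1 - norm q ^ Suc l" using q1 by (simp add: power_le_one)
  have "1 - norm q ^ Suc l \<le> norm (1::complex) - norm (q * q ^ l)" by (simp add: norm_mult norm_power)
  also have "\<dots> \<le> norm (1 - q * q ^ l)" by (rule norm_triangle_ineq2)
  finally show "1 - norm q ^ Suc l \<le> norm (1 - q * q ^ l)" .
qed

lemma norm_cc_le: "norm (cc q j i) \<le> 1 / rq i"
proof (induction j arbitrary: i)
  case 0
  have "0 \<le> 1 / rq i" using rq_pos[of i] by simp
  moreover have "rq 0 = 1" by (simp add: rq_def)
  ultimately show ?case by (cases "i = 0") auto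
next
  case (Suc j)
  show ?case
  proof (cases i)
    case 0 then show ?thesis using Suc[of 0] by simp
  next
    case (Suc i')
    have "norm (cc q (Suc j) i) \<le> norm (cc q j i') + norm q ^ i * norm (cc q j i)"
      using Suc by (simp add: norm_mult norm_power order.trans[OF norm_triangle_ineq])
    also have "\<dots> \<le> 1 / rq i' + norm q ^ i * (1 / rq i)"
      using Suc.IH[of i'] Suc.IH[of i] by (intro add_mono mult_left_mono) auto
    also have "\<dots> = 1 / rq i"
    proof -
      define d where "d = 1 - norm q ^ i"
      have d0: "0 < d" unfolding d_def using q1 nq_pos Suc by (simp add: power_less_one_iff)
      have ri: "rq i = rq i' * d" unfolding d_def Suc rq_Suc by simp
      have nqi: "norm q ^ i = 1 - d" unfolding d_def by simp
      show ?thesis unfolding ri nqi using d0 rq_pos[of i'] by (simp add: field_simps)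
    qed
    finally show ?thesis .
  qed
qed

lemma norm_cc_le': "norm (cc q j i) \<le> 1 / LQ"
proof -
  have "1 / rq i \<le> 1 / LQ"
    using rq_ge[of i] LQ_pos rq_pos[of i] by (intro divide_left_mono) auto
  then show ?thesis using norm_cc_le[of j i] by linarith
qed


lemma sum_nq_Suc_le: "(\<Sum>l<i. norm q ^ Suc l) \<le> 1 / (1 - norm q)"
proof -
  have "(\<Sum>l<Suc i. norm q ^ l) = 1 + (\<Sum>l<i. norm q ^ Suc l)"
    by (simp only: sum.lessThan_Suc_shift) simp
  then have "(\<Sum>l<i. norm q ^ Suc l) \<le> (\<Sum>l<Suc i. norm q ^ l)" by simp
  also have "\<dots> \<le> (\<Sum>l. norm q ^ l)" by (intro sum_le_suminf summable_nq) auto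
  finally show ?thesis using sum_nq by linarith
qed

definition Gm :: "complex \<Rightarrow> nat \<Rightarrow> nat \<Rightarrow> complex" where
  "Gm a m i = (\<Sum>k\<le>m. gk q a m k * phi q i (q ^ k))"

lemma Gm_zero: "m < i \<Longrightarrow> Gm a m i = 0"
  unfolding Gm_def G_closed by simp

lemma Gm_explicit:
  assumes "i \<le> m"
  shows "Gm a m i = (-1) ^ i * q ^ (tri i + i) * qpoch (inverse (q ^ m)) q i * qpoch (a * q ^ m) q i * (a * q ^ (m + i)) ^ (m - i)"
proof -
  have "phi q i (q ^ i) = (-1) ^ i * q ^ tri i * qpoch q q i"
    using phi_pow[of i i] by simp
  then have "phi q i (q ^ i) * q ^ i / qpoch q q i = (-1) ^ i * q ^ (tri i + i)"
    using qpoch_q_nz[of i] by (simp add: power_add)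
  then show ?thesis unfolding Gm_def G_closed using assms by simp
qed

lemma norm_qpoch_inv_le:
  assumes "i \<le> m"
  shows "norm q ^ (m * i) * norm (qpoch (inverse (q ^ m)) q i) \<le> norm q ^ tri i * exp (1 / (1 - norm q))"
proof -
  have "norm q ^ (m * i) * norm (qpoch (inverse (q ^ m)) q i) = (\<Prod>p<i. norm (q ^ m - q ^ p))"
  proof -
    have "norm q ^ (m * i) = (\<Prod>p<i. norm (q ^ m))" by (simp add: norm_power power_mult)
    moreover have "norm (qpoch (inverse (q ^ m)) q i) = (\<Prod>p<i. norm (1 - inverse (q ^ m) * q ^ p))"
      by (simp add: qpoch_def prod_norm)
    ultimately have "norm q ^ (m * i) * norm (qpoch (inverse (q ^ m)) q i) = (\<Prod>p<i. norm (q ^ m) * norm (1 - inverse (q ^ m) * q ^ p))"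
      by (simp add: prod.distrib)
    also have "\<dots> = (\<Prod>p<i. norm (q ^ m - q ^ p))"
      by (intro prod.cong refl) (use q0 in \<open>simp add: norm_mult[symmetric] right_diff_distrib mult.assoc[symmetric]\<close>)
    finally show ?thesis .
  qed
  also have "\<dots> \<le> (\<Prod>p<i. norm q ^ p * (1 + norm q ^ (i - p)))"
  proof (intro prod_mono conjI)
    fix p assume p: "p \<in> {..<i}"
    have h1: "norm (q ^ m - q ^ p) \<le> norm q ^ m + norm q ^ p"
      by (metis norm_power norm_triangle_ineq4)
    have h2: "norm q ^ m = norm q ^ p * norm q ^ (m - p)"
      using p assms by (simp add: power_add[symmetric])
    have h3: "norm q ^ p * norm q ^ (m - p) \<le> norm q ^ p * norm q ^ (i - p)"
      using p assms q1 by (intro mult_left_mono power_decreasing) auto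
    show "norm (q ^ m - q ^ p) \<le> norm q ^ p * (1 + norm q ^ (i - p))"
      using h1 h2 h3 by (simp add: algebra_simps)
  qed auto
  also have "\<dots> = norm q ^ tri i * (\<Prod>p<i. 1 + norm q ^ (i - p))"
    by (simp add: prod.distrib tri_def power_sum)
  also have "(\<Prod>p<i. 1 + norm q ^ (i - p)) \<le> exp (1 / (1 - norm q))"
  proof -
    have "(\<Prod>p<i. 1 + norm q ^ (i - p)) \<le> (\<Prod>p<i. exp (norm q ^ (i - p)))"
      by (intro prod_mono) (auto simp: add.commute exp_ge_add_one_self)
    also have "\<dots> = exp (\<Sum>p<i. norm q ^ (i - p))" by (simp add: exp_sum)
    also have "(\<Sum>p<i. norm q ^ (i - p)) = (\<Sum>p<i. norm q ^ Suc p)"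
    proof -
      have "(\<Sum>p<i. norm q ^ (i - p)) = (\<Sum>p<i. (\<lambda>t. norm q ^ Suc t) (i - Suc p))"
        by (intro sum.cong refl) (simp add: Suc_diff_Suc)
      also have "\<dots> = (\<Sum>p<i. norm q ^ Suc p)" by (rule sum.nat_diff_reindex)
      finally show ?thesis .
    qed
    finally show ?thesis using sum_nq_Suc_le[of i] by (meson exp_le_cancel_iff order.trans)
  qed
  finally show ?thesis by (simp add: mult_left_mono)
qed

lemma norm_Gm_le:
  assumes "i \<le> m"
  shows "norm (Gm a m i) \<le> exp (1 / (1 - norm q)) * exp (norm a / (1 - norm q)) * (norm a * norm q ^ m) ^ (m - i)"
proof -
  define E1 where "E1 = exp (1 / (1 - norm q))"
  define E2 where "E2 = exp (norm a / (1 - norm q))"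
  have n2: "norm (qpoch (a * q ^ m) q i) \<le> E2"
  proof -
    have "norm (qpoch (a * q ^ m) q i) \<le> exp (norm (a * q ^ m) / (1 - norm q))" by (rule norm_qpoch_le)
    also have "norm (a * q ^ m) \<le> norm a" using q1 by (simp add: norm_mult norm_power mult_left_le)
    then have "exp (norm (a * q ^ m) / (1 - norm q)) \<le> E2"
      unfolding E2_def using q1 by (simp add: divide_right_mono)
    finally show ?thesis .
  qed
  have n1: "norm q ^ (m * i) * norm (qpoch (inverse (q ^ m)) q i) \<le> norm q ^ tri i * E1"
    unfolding E1_def by (rule norm_qpoch_inv_le[OF assms])
  have ex: "2 * tri i + i + (m + i) * (m - i) = m * i + m * (m - i)"
  proof -
    obtain d where d: "m = i + d" using assms by (metis le_add_diff_inverse)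
    show ?thesis using tri_double[of i] unfolding d by (simp add: algebra_simps)
  qed
  have "norm q ^ (m * i) * norm (Gm a m i) = norm q ^ (tri i + i) * (norm q ^ (m * i) * norm (qpoch (inverse (q ^ m)) q i))
        * norm (qpoch (a * q ^ m) q i) * (norm a ^ (m - i) * norm q ^ ((m + i) * (m - i)))"
  proof -
    have "norm ((a * q ^ (m + i)) ^ (m - i)) = norm a ^ (m - i) * norm q ^ ((m + i) * (m - i))"
      by (simp add: norm_mult norm_power power_mult_distrib power_mult)
    moreover have "norm ((-1) ^ i * q ^ (tri i + i) :: complex) = norm q ^ (tri i + i)"
      by (simp add: norm_mult norm_power)
    ultimately show ?thesis unfolding Gm_explicit[OF assms] norm_mult by (simp only: mult_ac)
  qed
  also have "\<dots> \<le> norm q ^ (tri i + i) * (norm q ^ tri i * E1) * E2 * (norm a ^ (m - i) * norm q ^ ((m + i) * (m - i)))"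
    by (intro mult_mono n1 n2 mult_left_mono) (auto simp: E1_def E2_def)
  also have "\<dots> = norm q ^ (m * i) * (E1 * E2 * (norm a * norm q ^ m) ^ (m - i))"
  proof -
    have "norm q ^ (tri i + i) * norm q ^ tri i * norm q ^ ((m + i) * (m - i)) = norm q ^ (m * i) * norm q ^ (m * (m - i))"
      using ex by (simp add: power_add[symmetric] mult_2 add_ac)
    then show ?thesis by (simp add: power_mult_distrib power_mult[symmetric] mult_ac)
  qed
  finally have "norm q ^ (m * i) * norm (Gm a m i) \<le> norm q ^ (m * i) * (E1 * E2 * (norm a * norm q ^ m) ^ (m - i))" .
  then show ?thesis using nq_pos unfolding E1_def E2_def by (simp add: mult_le_cancel_left_pos)
qed


lemma T_sums:
  assumes holo: "f holomorphic_on ball 0 \<rho>" and r1: "1 < \<rho>"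
  shows "(\<lambda>j. (deriv ^^ j) f 0 / fact j * (\<Sum>i\<le>j. cc q j i * Gm a m i)) sums Tn q a (\<lambda>k. f (q ^ k)) m"
proof -
  define c where "c j = (deriv ^^ j) f 0 / fact j" for j
  have hk: "(\<lambda>j. c j * (q ^ k) ^ j) sums f (q ^ k)" for k
  proof -
    have "norm q ^ k \<le> 1" by simp
    then have "norm q ^ k < \<rho>" using r1 by linarith
    then have "q ^ k \<in> ball 0 \<rho>" by (simp add: norm_power)
    from holomorphic_power_series[OF holo this] show ?thesis by (simp add: c_def)
  qed
  have "(\<lambda>j. \<Sum>k\<le>m. gk q a m k * (c j * (q ^ k) ^ j)) sums (\<Sum>k\<le>m. gk q a m k * f (q ^ k))"
    by (intro sums_sum sums_mult hk)
  moreover have "(\<Sum>k\<le>m. gk q a m k * (c j * (q ^ k) ^ j)) = c j * (\<Sum>i\<le>j. cc q j i * Gm a m i)" for j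
  proof -
    have "(\<Sum>k\<le>m. gk q a m k * (c j * (q ^ k) ^ j)) = c j * (\<Sum>k\<le>m. \<Sum>i\<le>j. gk q a m k * (cc q j i * phi q i (q ^ k)))"
      by (subst mono_exp[of "q ^ _" j q]) (simp add: sum_distrib_left mult_ac)
    also have "\<dots> = c j * (\<Sum>i\<le>j. cc q j i * Gm a m i)"
      by (subst sum.swap) (simp add: Gm_def sum_distrib_left mult_ac)
    finally show ?thesis .
  qed
  ultimately show ?thesis by (simp add: c_def Tn_def)
qed

lemma geom_tail_sums:
  fixes r :: real assumes "0 \<le> r" "r < 1"
  shows "(\<lambda>j. if i \<le> j then r ^ j else 0) sums (r ^ i / (1 - r))"
proof -
  have "(\<lambda>n. r ^ i * r ^ n) sums (r ^ i * (1 / (1 - r)))"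
    by (intro sums_mult geometric_sums) (use assms in auto)
  then have "(\<lambda>n. (\<lambda>j. if i \<le> j then r ^ j else 0) (n + i)) sums (r ^ i / (1 - r) + (\<Sum>j<i. (\<lambda>j. if i \<le> j then r ^ j else 0) j))"
    by (simp add: power_add mult_ac)
  then show ?thesis by (subst (asm) sums_iff_shift) simp
qed

lemma sum_pow_rev_le:
  fixes x :: real assumes "0 \<le> x" "x \<le> 1/2"
  shows "(\<Sum>i\<le>m. x ^ (m - i)) \<le> 2"
proof -
  have "(\<Sum>i\<le>m. x ^ (m - i)) = (\<Sum>i<Suc m. (\<lambda>t. x ^ t) (Suc m - Suc i))"
    by (simp add: lessThan_Suc_atMost)
  also have "\<dots> = (\<Sum>i<Suc m. x ^ i)" by (rule sum.nat_diff_reindex)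
  also have "\<dots> \<le> (\<Sum>i. x ^ i)" by (intro sum_le_suminf summable_geometric) (use assms in auto)
  also have "\<dots> = 1 / (1 - x)" using suminf_geometric[of x] assms by simp
  also have "\<dots> \<le> 2" using assms by (simp add: field_simps)
  finally show ?thesis .
qed

lemma T_bound:
  assumes holo: "f holomorphic_on ball 0 \<rho>" and r1: "1 < \<rho>1" and r2: "\<rho>1 < \<rho>"
  shows "\<exists>K. eventually (\<lambda>m. norm (Tn q a (\<lambda>k. f (q ^ k)) m) \<le> K * (1 / \<rho>1) ^ m) sequentially"
proof -
  define c where "c j = (deriv ^^ j) f 0 / fact j" for j
  have cont: "continuous_on (cball 0 \<rho>1) f"
    by (rule holomorphic_on_imp_continuous_on, rule holomorphic_on_subset[OF holo]) (use r2 in auto)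
  obtain B where B0: "B \<ge> 0" and B: "\<And>x. x \<in> cball 0 \<rho>1 \<Longrightarrow> norm (f x) \<le> B"
    using continuous_on_compact_bound[OF compact_cball cont] by blast
  have cb: "norm (c j) \<le> B * (1 / \<rho>1) ^ j" for j
  proof -
    have "norm ((deriv ^^ j) f 0) \<le> fact j * B / \<rho>1 ^ j"
    proof (rule Cauchy_inequality)
      show "f holomorphic_on ball 0 \<rho>1" by (rule holomorphic_on_subset[OF holo]) (use r2 in auto)
      show "continuous_on (cball 0 \<rho>1) f" by (rule cont)
      show "0 < \<rho>1" using r1 by simp
      show "norm (f x) \<le> B" if "norm (0 - x) = \<rho>1" for x using B that by simp
    qed
    then show ?thesis unfolding c_def using r1 by (simp add: norm_divide field_simps)
  qed
  define E where "E = exp (1 / (1 - norm q)) * exp (norm a / (1 - norm q))"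
  have E0: "0 \<le> E" by (simp add: E_def)
  define r where "r = 1 / \<rho>1"
  have r0: "0 \<le> r" "r < 1" "0 < r" using r1 by (auto simp: r_def)
  define K where "K = B / LQ / (1 - r) * E * 2"
  have lim: "(\<lambda>m. norm a * norm q ^ m * \<rho>1) \<longlonglongrightarrow> 0"
    using q1 by (intro tendsto_eq_intros LIMSEQ_power_zero) auto
  have ev: "eventually (\<lambda>m. norm a * norm q ^ m * \<rho>1 < 1/2) sequentially"
    using order_tendstoD(2)[OF lim, of "1/2"] by simp
  have "eventually (\<lambda>m. norm (Tn q a (\<lambda>k. f (q ^ k)) m) \<le> K * r ^ m) sequentially"
    using ev
  proof eventually_elim
    case (elim m)
    define lam where "lam = norm a * norm q ^ m"
    have lam0: "0 \<le> lam" by (simp add: lam_def)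
    define X where "X j = (\<Sum>i\<le>j. cc q j i * Gm a m i)" for j
    define g where "g i = norm (Gm a m i) / LQ" for i
    define F where "F i j = B * g i * (if i \<le> j then r ^ j else 0)" for i j
    have g0: "m < i \<Longrightarrow> g i = 0" for i by (simp add: g_def Gm_zero)
    have Xb: "norm (c j * X j) \<le> (\<Sum>i\<le>m. F i j)" for j
    proof -
      have "norm (X j) \<le> (\<Sum>i\<le>j. norm (cc q j i) * norm (Gm a m i))"
        unfolding X_def by (rule order.trans[OF norm_sum]) (simp add: norm_mult)
      also have "\<dots> \<le> (\<Sum>i\<le>j. g i)"
      proof (intro sum_mono)
        fix i
        have "norm (cc q j i) * norm (Gm a m i) \<le> (1 / LQ) * norm (Gm a m i)"
          by (intro mult_right_mono norm_cc_le') simp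
        then show "norm (cc q j i) * norm (Gm a m i) \<le> g i" by (simp add: g_def)
      qed
      also have "(\<Sum>i\<le>j. g i) = (\<Sum>i\<le>m. if i \<le> j then g i else 0)"
      proof -
        have "(\<Sum>i\<le>j. g i) = (\<Sum>i\<in>{..j} \<inter> {..m}. g i)"
          by (rule sum.mono_neutral_right) (auto, metis g0 not_le)
        also have "\<dots> = (\<Sum>i\<in>{..m} \<inter> {..j}. g i)" by (simp add: Int_commute)
        also have "\<dots> = (\<Sum>i\<le>m. if i \<le> j then g i else 0)"
          by (subst sum.inter_restrict) auto
        finally show ?thesis .
      qed
      finally have nX: "norm (X j) \<le> (\<Sum>i\<le>m. if i \<le> j then g i else 0)" .
      have "norm (c j * X j) \<le> (B * r ^ j) * (\<Sum>i\<le>m. if i \<le> j then g i else 0)"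
        unfolding norm_mult using cb[of j] nX B0 r1 by (intro mult_mono) (auto simp: r_def)
      also have "\<dots> = (\<Sum>i\<le>m. F i j)"
        by (simp add: F_def sum_distrib_left if_distrib mult_ac cong: if_cong)
      finally show ?thesis .
    qed
    have Fs: "(F i) sums (B * g i * (r ^ i / (1 - r)))" for i
      unfolding F_def using sums_mult[OF geom_tail_sums[OF r0(1,2), of i], of "B * g i"]
      by (simp add: if_distrib cong: if_cong)
    have summF: "summable (\<lambda>j. \<Sum>i\<le>m. F i j)"
      by (intro summable_sum) (use Fs in \<open>auto simp: sums_iff\<close>)
    have Tsum: "(\<lambda>j. c j * X j) sums Tn q a (\<lambda>k. f (q ^ k)) m"
    proof -
      have "1 < \<rho>" using r1 r2 by simp
      from T_sums[OF holo this, of a m] show ?thesis by (simp add: c_def X_def)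
    qed
    have "norm (Tn q a (\<lambda>k. f (q ^ k)) m) \<le> (\<Sum>j. \<Sum>i\<le>m. F i j)"
      using norm_suminf_le[OF Xb summF] Tsum by (simp add: sums_iff)
    also have "\<dots> = (\<Sum>i\<le>m. B * g i * (r ^ i / (1 - r)))"
      by (subst suminf_sum) (use Fs in \<open>auto simp: sums_iff\<close>)
    also have "\<dots> \<le> (\<Sum>i\<le>m. B / LQ / (1 - r) * E * (r ^ m * (lam * \<rho>1) ^ (m - i)))"
    proof (intro sum_mono)
      fix i assume "i \<in> {..m}"
      then have im: "i \<le> m" by simp
      have "norm (Gm a m i) \<le> E * lam ^ (m - i)"
        using norm_Gm_le[OF im, of a] by (simp add: E_def lam_def)
      moreover have "lam ^ (m - i) * r ^ i = r ^ m * (lam * \<rho>1) ^ (m - i)"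
      proof -
        have "r ^ m * \<rho>1 ^ (m - i) = r ^ i"
        proof -
          have "r ^ m = r ^ i * r ^ (m - i)" using im by (simp add: power_add[symmetric])
          then show ?thesis using r1 by (simp add: r_def power_one_over field_simps)
        qed
        then show ?thesis by (simp add: power_mult_distrib mult_ac)
      qed
      ultimately have "norm (Gm a m i) * r ^ i \<le> E * (r ^ m * (lam * \<rho>1) ^ (m - i))"
        using r0 by (metis (no_types, lifting) mult.assoc mult_right_mono zero_le_power)
      then have h: "norm (Gm a m i) * r ^ i \<le> E * (r ^ m * (lam * \<rho>1) ^ (m - i))" .
      have "B * g i * (r ^ i / (1 - r)) = (B / LQ / (1 - r)) * (norm (Gm a m i) * r ^ i)"
        unfolding g_def using r0 LQ_pos by (simp add: field_simps)
      also have "\<dots> \<le> (B / LQ / (1 - r)) * (E * (r ^ m * (lam * \<rho>1) ^ (m - i)))"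
        by (rule mult_left_mono[OF h]) (use B0 LQ_pos r0 in simp)
      finally show "B * g i * (r ^ i / (1 - r)) \<le> B / LQ / (1 - r) * E * (r ^ m * (lam * \<rho>1) ^ (m - i))"
        by (simp add: mult_ac)
    qed
    also have "\<dots> = B / LQ / (1 - r) * E * r ^ m * (\<Sum>i\<le>m. (lam * \<rho>1) ^ (m - i))"
      by (simp only: sum_distrib_left mult.assoc)
    also have "\<dots> \<le> B / LQ / (1 - r) * E * r ^ m * 2"
    proof (rule mult_left_mono)
      show "(\<Sum>i\<le>m. (lam * \<rho>1) ^ (m - i)) \<le> 2"
        using elim lam0 r1 by (intro sum_pow_rev_le) (auto simp: lam_def)
      show "0 \<le> B / LQ / (1 - r) * E * r ^ m" using B0 LQ_pos r0 E0 by simp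
    qed
    also have "\<dots> = K * r ^ m" by (simp add: K_def)
    finally show ?case .
  qed
  then show ?thesis unfolding r_def by blast
qed


lemma norm_an_le:
  assumes a1: "a \<noteq> 1"
  shows "norm (an q a m) \<le> (1 + norm a) * exp (norm a / (1 - norm q)) / (norm (1 - a) * LQ)"
proof -
  have n1: "norm (1 - a * q ^ (2 * m)) \<le> 1 + norm a"
  proof -
    have "norm (1 - a * q ^ (2 * m)) \<le> norm (1::complex) + norm (a * q ^ (2 * m))" by (rule norm_triangle_ineq4)
    also have "norm (a * q ^ (2 * m)) \<le> norm a" by (simp add: norm_mult norm_power mult_left_le)
    finally show ?thesis by simp
  qed
  have n2: "norm (qpoch a q m) \<le> exp (norm a / (1 - norm q))" by (rule norm_qpoch_le)
  have n3: "LQ \<le> norm (qpoch q q m)" using rq_ge norm_qpoch_q_ge order.trans by blast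
  have "norm (an q a m) = norm (1 - a * q ^ (2 * m)) * norm (qpoch a q m) / (norm (1 - a) * norm (qpoch q q m))"
    by (simp add: an_def norm_mult norm_divide)
  also have "\<dots> \<le> (1 + norm a) * exp (norm a / (1 - norm q)) / (norm (1 - a) * LQ)"
    using a1 LQ_pos by (intro frac_le mult_mono n1 n2 mult_left_mono n3) auto
  finally show ?thesis .
qed

lemma norm_phi_le:
  assumes "norm z \<le> R" "1 \<le> R"
  shows "norm (phi q m z) \<le> R ^ m * exp (1 / (1 - norm q))"
proof -
  have "norm (phi q m z) \<le> (\<Prod>i<m. R * (1 + norm q ^ i))"
    unfolding phi_def prod_norm[symmetric]
  proof (intro prod_mono conjI)
    fix i
    have "norm (z - q ^ i) \<le> norm z + norm q ^ i" by (metis norm_power norm_triangle_ineq4)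
    also have "\<dots> \<le> R + R * norm q ^ i"
    proof -
      have "1 * norm q ^ i \<le> R * norm q ^ i" by (rule mult_right_mono) (use assms in auto)
      then show ?thesis using assms by simp
    qed
    finally show "norm (z - q ^ i) \<le> R * (1 + norm q ^ i)" by (simp add: algebra_simps)
  qed simp
  also have "\<dots> = R ^ m * (\<Prod>i<m. 1 + norm q ^ i)" by (simp add: prod.distrib)
  also have "(\<Prod>i<m. 1 + norm q ^ i) \<le> exp (1 / (1 - norm q))"
  proof -
    have "(\<Prod>i<m. 1 + norm q ^ i) \<le> (\<Prod>i<m. exp (norm q ^ i))"
      by (intro prod_mono) (auto simp: add.commute exp_ge_add_one_self)
    also have "\<dots> = exp (\<Sum>i<m. norm q ^ i)" by (simp add: exp_sum)
    also have "(\<Sum>i<m. norm q ^ i) \<le> (\<Sum>i. norm q ^ i)" by (intro sum_le_suminf summable_nq) auto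
    then have "exp (\<Sum>i<m. norm q ^ i) \<le> exp (1 / (1 - norm q))" using sum_nq by simp
    finally show ?thesis .
  qed
  then have "R ^ m * (\<Prod>i<m. 1 + norm q ^ i) \<le> R ^ m * exp (1 / (1 - norm q))"
    using assms by (intro mult_left_mono) auto
  finally show ?thesis .
qed

lemma norm_psi_le:
  assumes "norm z \<le> R" "1 \<le> R"
  shows "norm (psi q a m z) \<le> R ^ m * exp (1 / (1 - norm q)) * exp (norm a * R / (1 - norm q))"
proof -
  have "norm (qpoch_inf (a * q ^ Suc m * z) q) \<le> exp (norm (a * q ^ Suc m * z) / (1 - norm q))"
    by (rule norm_P_le)
  also have "norm (a * q ^ Suc m * z) \<le> norm a * R"
  proof -
    have "norm (a * q ^ Suc m * z) = norm a * (norm q ^ Suc m * norm z)" by (simp add: norm_mult norm_power)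
    also have "norm q ^ Suc m * norm z \<le> 1 * R"
      using assms by (intro mult_mono) (auto simp del: power_Suc)
    finally show ?thesis by (simp add: mult_left_mono)
  qed
  then have "exp (norm (a * q ^ Suc m * z) / (1 - norm q)) \<le> exp (norm a * R / (1 - norm q))"
    using q1 by (simp add: divide_right_mono)
  finally have P: "norm (qpoch_inf (a * q ^ Suc m * z) q) \<le> exp (norm a * R / (1 - norm q))" .
  have "0 \<le> R" using assms by simp
  then show ?thesis unfolding psi_def norm_mult
    by (intro mult_mono norm_phi_le[OF assms] P) auto
qed

lemma psi_holo [holomorphic_intros]: "(\<lambda>z. psi q a m z) holomorphic_on S"
  unfolding psi_def phi_def by (intro holomorphic_intros)

lemma psi_zero: "m > k \<Longrightarrow> psi q a m (q ^ k) = 0"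
  by (simp add: psi_def phi_zero)

lemma zero_islimpt_nodes: "0 islimpt range (\<lambda>k. q ^ k)"
proof -
  have l: "(\<lambda>n. q ^ Suc n) \<longlonglongrightarrow> 0"
    by (rule LIMSEQ_Suc[OF LIMSEQ_power_zero[OF q1]])
  have m: "q ^ Suc n \<in> range (\<lambda>k. q ^ k) - {0}" for n
  proof
    show "q ^ Suc n \<in> range (\<lambda>k. q ^ k)" by (rule rangeI)
    show "q ^ Suc n \<notin> {0}" using q0 by simp
  qed
  show ?thesis unfolding islimpt_sequential
    by (rule exI[of _ "\<lambda>n. q ^ Suc n"]) (use l m in simp)
qed

lemma ET:
  assumes g: "good a" and a1: "a \<noteq> 1" and holo: "f holomorphic_on ball 0 \<rho>" and r: "1 < \<rho>"
    and s: "s \<in> ball 0 \<rho>"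
  shows "(\<lambda>m. an q a m * Tn q a (\<lambda>k. f (q ^ k)) m * psi q a m s) sums (qpoch_inf (a * q) q * f s)"
proof -
  define M0 where "M0 = max 1 (norm s)"
  have M0: "M0 < \<rho>" "1 \<le> M0" "norm s \<le> M0" using r s by (auto simp: M0_def)
  define \<rho>1 where "\<rho>1 = (M0 + \<rho>) / 2"
  define \<rho>2 where "\<rho>2 = (M0 + \<rho>1) / 2"
  have rr: "1 < \<rho>1" "\<rho>1 < \<rho>" "norm s < \<rho>2" "\<rho>2 < \<rho>1" "1 < \<rho>2" "0 < \<rho>2"
    unfolding \<rho>1_def \<rho>2_def using M0 by (auto simp: field_simps)
  define V where "V k = f (q ^ k)" for k
  obtain K where K: "eventually (\<lambda>m. norm (Tn q a V m) \<le> K * (1 / \<rho>1) ^ m) sequentially"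
    using T_bound[OF holo rr(1,2), of a] unfolding V_def by blast
  define Ca where "Ca = (1 + norm a) * exp (norm a / (1 - norm q)) / (norm (1 - a) * LQ)"
  define Cp where "Cp = exp (1 / (1 - norm q)) * exp (norm a * \<rho>2 / (1 - norm q))"
  define trm where "trm m z = an q a m * Tn q a V m * psi q a m z" for m z
  have Cp0: "0 \<le> Cp" by (simp add: Cp_def)
  have Ca0: "0 \<le> Ca" using LQ_pos by (simp add: Ca_def)
  have bnd: "eventually (\<lambda>m. \<forall>z\<in>cball 0 \<rho>2. norm (trm m z) \<le> Ca * K * Cp * (\<rho>2 / \<rho>1) ^ m) sequentially"
    using K
  proof eventually_elim
    case (elim m)
    show ?case
    proof
      fix z :: complex assume "z \<in> cball 0 \<rho>2"
      then have z: "norm z \<le> \<rho>2" by simp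
      have "norm (trm m z) = norm (an q a m) * norm (Tn q a V m) * norm (psi q a m z)"
        by (simp add: trm_def norm_mult)
      have nA: "norm (an q a m) \<le> Ca" unfolding Ca_def by (rule norm_an_le[OF a1])
      have nP: "norm (psi q a m z) \<le> \<rho>2 ^ m * Cp"
        using norm_psi_le[OF z less_imp_le[OF rr(5)], of a m] by (simp add: Cp_def mult.assoc)
      have rpos: "0 < (1 / \<rho>1) ^ m" using rr by simp
      have K0: "0 \<le> K"
      proof -
        have "0 \<le> K * (1 / \<rho>1) ^ m" using elim norm_ge_zero order.trans by blast
        then show ?thesis using rpos by (simp add: zero_le_mult_iff)
      qed
      have s1: "norm (an q a m) * norm (Tn q a V m) \<le> Ca * (K * (1 / \<rho>1) ^ m)"
        by (rule mult_mono[OF nA elim Ca0 norm_ge_zero])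
      have s2: "norm (an q a m) * norm (Tn q a V m) * norm (psi q a m z) \<le> Ca * (K * (1 / \<rho>1) ^ m) * (\<rho>2 ^ m * Cp)"
        by (rule mult_mono[OF s1 nP]) (use Ca0 K0 rpos in auto)
      have e: "(1 / \<rho>1) ^ m * \<rho>2 ^ m = (\<rho>2 / \<rho>1) ^ m" by (simp add: power_divide)
      have "Ca * (K * (1 / \<rho>1) ^ m) * (\<rho>2 ^ m * Cp) = Ca * K * Cp * ((1 / \<rho>1) ^ m * \<rho>2 ^ m)"
        by (simp only: mult_ac)
      also have "\<dots> = Ca * K * Cp * (\<rho>2 / \<rho>1) ^ m" by (simp only: e)
      finally have s3: "Ca * (K * (1 / \<rho>1) ^ m) * (\<rho>2 ^ m * Cp) = Ca * K * Cp * (\<rho>2 / \<rho>1) ^ m" .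
      have "norm (trm m z) \<le> Ca * K * Cp * (\<rho>2 / \<rho>1) ^ m"
        using s2 s3 by (simp add: trm_def norm_mult)
      then show "norm (trm m z) \<le> Ca * K * Cp * (\<rho>2 / \<rho>1) ^ m" .
    qed
  qed
  have summ: "summable (\<lambda>m. Ca * K * Cp * (\<rho>2 / \<rho>1) ^ m)"
    using rr by (intro summable_mult summable_geometric) auto
  have ul: "uniform_limit (cball 0 \<rho>2) (\<lambda>n z. \<Sum>i<n. trm i z) (\<lambda>z. \<Sum>i. trm i z) sequentially"
    by (rule Weierstrass_m_test_ev[OF bnd summ])
  have hol_ps: "eventually (\<lambda>n. continuous_on (cball 0 \<rho>2) (\<lambda>z. \<Sum>i<n. trm i z) \<and> (\<lambda>z. \<Sum>i<n. trm i z) holomorphic_on ball 0 \<rho>2) sequentially"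
  proof (intro always_eventually allI conjI)
    fix n
    have "(\<lambda>z. \<Sum>i<n. trm i z) holomorphic_on UNIV" unfolding trm_def by (intro holomorphic_intros)
    then show "continuous_on (cball 0 \<rho>2) (\<lambda>z. \<Sum>i<n. trm i z)" "(\<lambda>z. \<Sum>i<n. trm i z) holomorphic_on ball 0 \<rho>2"
      by (auto intro: holomorphic_on_subset holomorphic_on_imp_continuous_on)
  qed
  obtain Lcont: "continuous_on (cball 0 \<rho>2) (\<lambda>z. \<Sum>i. trm i z)" and Lholo: "(\<lambda>z. \<Sum>i. trm i z) holomorphic_on ball 0 \<rho>2"
    using holomorphic_uniform_limit[OF hol_ps ul trivial_limit_sequentially] by blast
  have sums_at: "(\<lambda>i. trm i z) sums (\<Sum>i. trm i z)" if "z \<in> cball 0 \<rho>2" for z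
    unfolding sums_def using tendsto_uniform_limitI[OF ul that] .
  define h where "h z = (\<Sum>i. trm i z) - qpoch_inf (a * q) q * f z" for z
  have hholo: "h holomorphic_on ball 0 \<rho>2"
    unfolding h_def
    by (intro holomorphic_intros Lholo holomorphic_on_subset[OF holo]) (use rr in auto)
  have hnode: "h z = 0" if zr: "z \<in> range (\<lambda>k. q ^ k)" for z
  proof -
    obtain k where zk: "z = q ^ k" using zr by blast
    have "(\<lambda>i. trm i (q ^ k)) sums (\<Sum>i\<le>k. trm i (q ^ k))"
      by (rule sums_finite) (auto simp: trm_def psi_zero)
    then have "(\<Sum>i. trm i (q ^ k)) = (\<Sum>i\<le>k. trm i (q ^ k))" by (simp add: sums_iff)
    also have "\<dots> = qpoch_inf (a * q) q * V k"
      unfolding trm_def by (rule S1_good[OF g a1])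
    finally show ?thesis by (simp add: h_def zk V_def)
  qed
  have "h s = 0"
  proof (rule analytic_continuation[OF hholo])
    show "open (ball (0::complex) \<rho>2)" "connected (ball (0::complex) \<rho>2)" by auto
    show "range (\<lambda>k. q ^ k) \<subseteq> ball 0 \<rho>2"
    proof
      fix z assume "z \<in> range (\<lambda>k. q ^ k)"
      then obtain k where "z = q ^ k" by blast
      moreover have "norm q ^ k \<le> 1" by simp
      moreover have "norm q ^ k < \<rho>2" using rr \<open>norm q ^ k \<le> 1\<close> by linarith
      ultimately show "z \<in> ball 0 \<rho>2" by (simp add: norm_power)
    qed
    show "0 \<in> ball (0::complex) \<rho>2" using rr by simp
    show "0 islimpt range (\<lambda>k. q ^ k)" by (rule zero_islimpt_nodes)
    show "h z = 0" if "z \<in> range (\<lambda>k. q ^ k)" for z using hnode that .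
    show "s \<in> ball 0 \<rho>2" using rr by simp
  qed
  moreover have "(\<lambda>i. trm i s) sums (\<Sum>i. trm i s)" using sums_at rr by simp
  ultimately show ?thesis unfolding trm_def h_def V_def by simp
qed

end


context qctx
begin

lemma phi_add: "phi q (K + m) s = phi q K s * (\<Prod>i<m. s - q ^ (K + i))"
  by (induction m) (simp_all add: phi_Suc)

lemma psi_shift:
  "psi q a (K + m) s = phi q K s * q ^ (K * m) * psi q (a * q ^ (2 * K)) m (s / q ^ K)"
proof -
  have p: "(\<Prod>i<m. s - q ^ (K + i)) = q ^ (K * m) * phi q m (s / q ^ K)"
  proof -
    have "(\<Prod>i<m. s - q ^ (K + i)) = (\<Prod>i<m. q ^ K * (s / q ^ K - q ^ i))"
      using q0 by (intro prod.cong refl) (simp add: field_simps power_add)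
    also have "\<dots> = q ^ (K * m) * phi q m (s / q ^ K)"
      by (simp add: prod.distrib phi_def power_mult)
    finally show ?thesis .
  qed
  have qK: "q ^ K \<noteq> 0" using q0 by simp
  have e: "a * q ^ Suc (K + m) * s = a * q ^ (2 * K) * q ^ Suc m * (s / q ^ K)"
  proof -
    have "a * q ^ (2 * K) * q ^ Suc m * (s / q ^ K) = a * q ^ K * q ^ Suc m * s * (q ^ K / q ^ K)"
      by (simp add: mult_2 power_add)
    also have "\<dots> = a * q ^ K * q ^ Suc m * s" using qK by simp
    also have "\<dots> = a * q ^ Suc (K + m) * s" by (simp add: power_add mult_ac)
    finally show ?thesis by simp
  qed
  show ?thesis unfolding psi_def phi_add p e by (simp add: mult_ac)
qed

lemma phi_diag_nz: "phi q k (q ^ k) \<noteq> 0"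
  using phi_pow[of k k] qpoch_q_nz[of k] q0 by auto

lemma tri_unique:
  fixes x y :: "nat \<Rightarrow> complex"
  assumes "\<And>k. (\<Sum>m\<le>k. x m * D m k) = (\<Sum>m\<le>k. y m * D m k)" and "\<And>k. D k k \<noteq> 0"
  shows "x k = y k"
proof (induction k rule: less_induct)
  case (less k)
  have "(\<Sum>m<k. x m * D m k) + x k * D k k = (\<Sum>m<k. y m * D m k) + y k * D k k"
    using assms(1)[of k] by (simp add: lessThan_Suc_atMost[symmetric])
  moreover have "(\<Sum>m<k. x m * D m k) = (\<Sum>m<k. y m * D m k)" using less.IH by simp
  ultimately have "x k * D k k = y k * D k k" by simp
  then show ?case using assms(2)[of k] by simp
qed

lemma zero_islimpt_nodes_ball:
  assumes "0 < r" shows "0 islimpt (range (\<lambda>k. q ^ k) \<inter> ball 0 r)"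
proof -
  obtain K where K: "norm q ^ K < r" using real_arch_pow_inv[OF assms q1] by blast
  have l: "(\<lambda>n. q ^ (Suc n + K)) \<longlonglongrightarrow> 0"
    using LIMSEQ_ignore_initial_segment[OF LIMSEQ_Suc[OF LIMSEQ_power_zero[OF q1]], of K] by simp
  have m: "q ^ (Suc n + K) \<in> (range (\<lambda>k. q ^ k) \<inter> ball 0 r) - {0}" for n
  proof -
    have "norm q ^ (Suc n + K) \<le> norm q ^ K" using q1 by (intro power_decreasing) auto
    then have "norm q ^ (Suc n + K) < r" using K by linarith
    then show ?thesis using q0 by (auto simp: norm_power simp del: power_Suc)
  qed
  show ?thesis unfolding islimpt_sequential
    by (rule exI[of _ "\<lambda>n. q ^ (Suc n + K)"]) (use l m in simp)
qed


lemma bad_perturb: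
  assumes j0: "0 < j0" and aj: "a * q ^ j0 = 1" and e0: "0 < e" and e1: "e < 1 / norm q - 1"
  shows "a * (1 + of_real e) * q ^ j \<noteq> 1"
proof
  assume H: "a * (1 + of_real e) * q ^ j = 1"
  have na: "norm a * norm q ^ j0 = 1" using arg_cong[OF aj, of norm] by (simp add: norm_mult norm_power)
  have ne: "norm (1 + complex_of_real e) = 1 + e"
  proof -
    have "norm (1 + complex_of_real e) = norm (complex_of_real (1 + e))" by simp
    also have "\<dots> = 1 + e" using e0 by (simp only: norm_of_real; simp)
    finally show ?thesis .
  qed
  have nH: "norm a * (1 + e) * norm q ^ j = 1"
    using arg_cong[OF H, of norm] unfolding norm_mult norm_power ne by simp
  have nq: "0 < norm q" "norm q < 1" using q0 q1 by auto
  have key: "(1 + e) * norm q ^ j = norm q ^ j0"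
  proof -
    have "(1 + e) * norm q ^ j = (norm a * norm q ^ j0) * ((1 + e) * norm q ^ j)" using na by simp
    also have "\<dots> = (norm a * (1 + e) * norm q ^ j) * norm q ^ j0" by (simp only: mult_ac)
    also have "\<dots> = norm q ^ j0" using nH by simp
    finally show ?thesis .
  qed
  show False
  proof (cases "j \<le> j0")
    case True
    then have "norm q ^ j0 = norm q ^ j * norm q ^ (j0 - j)" by (simp add: power_add[symmetric])
    with key have "(1 + e) * norm q ^ j = norm q ^ (j0 - j) * norm q ^ j" by (simp add: mult_ac)
    then have "1 + e = norm q ^ (j0 - j)" using nq by simp
    moreover have "norm q ^ (j0 - j) \<le> 1" using nq by (simp add: power_le_one)
    ultimately show False using e0 by simp
  next
    case False
    then have "norm q ^ j = norm q ^ j0 * norm q ^ (j - j0)" by (simp add: power_add[symmetric])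
    with key have "((1 + e) * norm q ^ (j - j0)) * norm q ^ j0 = 1 * norm q ^ j0" by (simp add: mult_ac)
    then have h: "(1 + e) * norm q ^ (j - j0) = 1" using nq by simp
    have "norm q ^ (j - j0) \<le> norm q ^ 1" using False nq by (intro power_decreasing) auto
    then have "(1 + e) * norm q ^ (j - j0) \<le> (1 + e) * norm q" using e0 by (intro mult_left_mono) auto
    also have "(1 + e) * norm q < (1 / norm q) * norm q" using e1 nq by (intro mult_strict_right_mono) auto
    also have "\<dots> = 1" using nq by simp
    finally show False using h by simp
  qed
qed

lemma isCont_qpoch [continuous_intros]: "isCont f a \<Longrightarrow> isCont (\<lambda>x. qpoch (f x) q n) a"
  unfolding qpoch_def by (intro continuous_intros)

lemma S1_all:
  assumes a1: "a \<noteq> 1"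
  shows "(\<Sum>n\<le>k. an q a n * Tn q a B n * psi q a n (q ^ k)) = qpoch_inf (a * q) q * B k"
proof (cases "good a")
  case True then show ?thesis by (rule S1_good[OF _ a1])
next
  case False
  then obtain j0 where j0: "0 < j0" and aj: "a * q ^ j0 = 1" unfolding good_def by blast
  define F where "F x = (\<Sum>n\<le>k. an q x n * Tn q x B n * psi q x n (q ^ k)) - qpoch_inf (x * q) q * B k" for x
  define e0 where "e0 = (1 / norm q - 1) / 2"
  have e0p: "0 < e0" "e0 < 1 / norm q - 1" using q0 q1 by (auto simp: e0_def field_simps)
  define x where "x m = a * (1 + of_real (e0 / real (Suc m)))" for m
  have xgood: "good (x m)" and x1: "x m \<noteq> 1" for m
  proof -
    have d: "e0 / real (Suc m) \<le> e0 / 1" by (rule divide_left_mono) (use e0p in auto)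
    have ep: "0 < e0 / real (Suc m)" "e0 / real (Suc m) < 1 / norm q - 1"
      using e0p d by auto
    have H: "x m * q ^ j \<noteq> 1" for j unfolding x_def by (rule bad_perturb[OF j0 aj ep])
    show "good (x m)" unfolding good_def using H by blast
    show "x m \<noteq> 1" using H[of 0] by simp
  qed
  have Fx: "F (x m) = 0" for m using S1_good[OF xgood x1] by (simp add: F_def)
  have lim: "(\<lambda>m. x m) \<longlonglongrightarrow> a"
  proof -
    have "(\<lambda>m. e0 * inverse (real (Suc m))) \<longlonglongrightarrow> e0 * 0"
      by (intro tendsto_mult tendsto_const LIMSEQ_inverse_real_of_nat)
    then have "(\<lambda>m. e0 / real (Suc m)) \<longlonglongrightarrow> 0" by (simp add: divide_inverse)
    then have "(\<lambda>m. a * (1 + of_real (e0 / real (Suc m)))) \<longlonglongrightarrow> a * (1 + of_real 0)"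
      by (intro tendsto_intros)
    then show ?thesis unfolding x_def by simp
  qed
  have nz: "(1 - a) * qpoch q q n \<noteq> 0" for n using a1 qpoch_q_nz by simp
  have cont: "isCont F a"
    unfolding F_def an_def Tn_def gk_def psi_def
    by (intro continuous_intros) (use nz qpoch_q_nz in auto)
  have "(\<lambda>m. F (x m)) \<longlonglongrightarrow> F a" by (rule isCont_tendsto_compose[OF cont lim])
  then have "F a = 0" using Fx by (simp add: LIMSEQ_const_iff)
  then show ?thesis by (simp add: F_def)
qed


lemma sum_split_at:
  fixes f :: "nat \<Rightarrow> complex"
  shows "(\<Sum>n\<le>K + k. f n) = (\<Sum>n<K. f n) + (\<Sum>m\<le>k. f (K + m))"
  by (induction k) (simp_all add: lessThan_Suc_atMost[symmetric])

lemma CORE_bad: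
  assumes a1: "a \<noteq> 1" and bad: "\<not> good a" and holo: "R holomorphic_on ball 0 r" and r0: "0 < r"
    and nodes: "\<And>k. norm q ^ k < r \<Longrightarrow> R (q ^ k) = qpoch_inf (a * q) q * B k"
    and s: "s \<in> ball 0 r"
  shows "(\<lambda>n. an q a n * Tn q a B n * psi q a n s) sums R s"
proof -
  obtain j0 where j0: "0 < j0" and aj: "a * q ^ j0 = 1" using bad unfolding good_def by blast
  have P0: "qpoch_inf (a * q) q = 0"
  proof (rule P_zero)
    show "a * q * q ^ (j0 - 1) = 1" using aj j0 by (cases j0) (simp_all add: mult.assoc)
  qed
  have anz: "an q a n = 0" if "j0 < n" for n
  proof -
    have "qpoch a q n = 0" unfolding qpoch_def using that aj by (intro prod_zero) auto
    then show ?thesis by (simp add: an_def)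
  qed
  define S where "S z = (\<Sum>n\<le>j0. an q a n * Tn q a B n * psi q a n z)" for z
  define h where "h z = S z - R z" for z
  have hholo: "h holomorphic_on ball 0 r"
  proof -
    have "(\<lambda>z. S z) holomorphic_on ball 0 r"
      unfolding S_def by (intro holomorphic_on_sum holomorphic_on_mult holomorphic_on_const psi_holo)
    then show ?thesis unfolding h_def by (rule holomorphic_on_diff[OF _ holo])
  qed
  have hz: "h z = 0" if zU: "z \<in> range (\<lambda>k. q ^ k) \<inter> ball 0 r" for z
  proof -
    obtain k where zk: "z = q ^ k" and kr: "norm q ^ k < r" using zU by (auto simp: norm_power)
    define T where "T n = an q a n * Tn q a B n * psi q a n (q ^ k)" for n
    have "S z = (\<Sum>n\<le>j0 + k. T n)"
      unfolding S_def zk T_def by (rule sum.mono_neutral_left) (auto simp: anz)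
    also have "\<dots> = (\<Sum>n\<le>k. T n)"
      unfolding T_def by (rule sum.mono_neutral_right) (auto simp: psi_zero)
    also have "\<dots> = qpoch_inf (a * q) q * B k" unfolding T_def by (rule S1_all[OF a1])
    finally have "S z = 0" using P0 by simp
    moreover have "R z = 0" using nodes[OF kr] P0 zk by simp
    ultimately show ?thesis by (simp add: h_def)
  qed
  have "h s = 0"
  proof (rule analytic_continuation[OF hholo])
    show "open (ball (0::complex) r)" "connected (ball (0::complex) r)" by auto
    show "range (\<lambda>k. q ^ k) \<inter> ball 0 r \<subseteq> ball 0 r" by auto
    show "0 \<in> ball (0::complex) r" using r0 by simp
    show "0 islimpt range (\<lambda>k. q ^ k) \<inter> ball 0 r" by (rule zero_islimpt_nodes_ball[OF r0])
    show "h z = 0" if "z \<in> range (\<lambda>k. q ^ k) \<inter> ball 0 r" for z using hz that .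
    show "s \<in> ball 0 r" by (rule s)
  qed
  moreover have "(\<lambda>n. an q a n * Tn q a B n * psi q a n s) sums S s"
    unfolding S_def by (rule sums_finite) (auto simp: anz)
  ultimately show ?thesis by (simp add: h_def)
qed


lemma CORE_good:
  assumes g: "good a" and a1: "a \<noteq> 1" and holo: "R holomorphic_on ball 0 r" and r0: "0 < r"
    and nodes: "\<And>k. norm q ^ k < r \<Longrightarrow> R (q ^ k) = qpoch_inf (a * q) q * B k"
    and s: "s \<in> ball 0 r"
  shows "(\<lambda>n. an q a n * Tn q a B n * psi q a n s) sums R s"
proof -
  obtain K0 where "norm q ^ K0 < r" using real_arch_pow_inv[OF r0 q1] by blast
  define K where "K = (LEAST K. norm q ^ K < r)"
  have K: "norm q ^ K < r" unfolding K_def by (rule LeastI) fact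
  have Kmin: "r \<le> norm q ^ i" if "i < K" for i
    using not_less_Least[OF that[unfolded K_def]] by simp
  define a' where "a' = a * q ^ (2 * K)"
  have g': "good a'" unfolding good_def a'_def
  proof (intro allI impI)
    fix j :: nat assume "0 < j"
    then show "a * q ^ (2 * K) * q ^ j \<noteq> 1"
      using g unfolding good_def by (metis add_gr_0 mult.assoc power_add)
  qed
  have a1': "a' \<noteq> 1"
  proof (cases "K = 0")
    case True then show ?thesis using a1 by (simp add: a'_def)
  next
    case False then show ?thesis using g unfolding good_def a'_def by simp
  qed
  have qK: "q ^ K \<noteq> 0" "0 < norm q ^ K" using q0 by auto
  define \<rho> where "\<rho> = r / norm q ^ K"
  have \<rho>1: "1 < \<rho>" using K qK by (simp add: \<rho>_def)
  have inball: "q ^ K * z \<in> ball 0 r" if "z \<in> ball 0 \<rho>" for z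
  proof -
    have "norm (q ^ K * z) = norm q ^ K * norm z" by (simp add: norm_mult norm_power)
    also have "\<dots> < norm q ^ K * \<rho>" using that qK by simp
    also have "\<dots> = r" using qK by (simp add: \<rho>_def)
    finally show ?thesis by simp
  qed
  have phinz: "phi q K (q ^ K * z) \<noteq> 0" if "z \<in> ball 0 \<rho>" for z
  proof
    assume "phi q K (q ^ K * z) = 0"
    then obtain i where i: "i < K" "q ^ K * z - q ^ i = 0" unfolding phi_def by auto
    then have "norm q ^ i = norm (q ^ K * z)" by (simp add: norm_power)
    also have "\<dots> < r" using inball[OF that] by simp
    finally show False using Kmin[OF i(1)] by simp
  qed
  have P'nz: "qpoch_inf (a' * q) q \<noteq> 0"
  proof (rule P_nonzero)
    fix k show "a' * q * q ^ k \<noteq> 1" using g' unfolding good_def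
      by (metis mult.assoc power_Suc zero_less_Suc)
  qed
  define d where "d n = an q a n * Tn q a B n" for n
  define \<Phi> where "\<Phi> z = (R (q ^ K * z) - (\<Sum>n<K. d n * psi q a n (q ^ K * z))) /
                         (phi q K (q ^ K * z) * qpoch_inf (a' * q) q)" for z
  have Rc: "(\<lambda>z. R (q ^ K * z)) holomorphic_on ball 0 \<rho>"
  proof -
    have "((\<lambda>z. R z) \<circ> (\<lambda>z. q ^ K * z)) holomorphic_on ball 0 \<rho>"
      by (rule holomorphic_on_compose_gen[OF _ holo]) (auto intro: holomorphic_intros inball)
    then show ?thesis by (simp add: o_def)
  qed
  have \<Phi>holo: "\<Phi> holomorphic_on ball 0 \<rho>"
    unfolding \<Phi>_def
  proof (rule holomorphic_on_divide)
    show "(\<lambda>z. R (q ^ K * z) - (\<Sum>n<K. d n * psi q a n (q ^ K * z))) holomorphic_on ball 0 \<rho>"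
      by (intro holomorphic_on_diff Rc holomorphic_on_sum holomorphic_on_mult holomorphic_on_const
          holomorphic_on_compose_gen[OF _ psi_holo, unfolded o_def] holomorphic_intros) auto
    show "(\<lambda>z. phi q K (q ^ K * z) * qpoch_inf (a' * q) q) holomorphic_on ball 0 \<rho>"
      unfolding phi_def by (intro holomorphic_intros)
    show "\<And>z. z \<in> ball 0 \<rho> \<Longrightarrow> phi q K (q ^ K * z) * qpoch_inf (a' * q) q \<noteq> 0"
      using phinz P'nz by simp
  qed
  define s' where "s' = s / q ^ K"
  have sK: "q ^ K * s' = s" using qK by (simp add: s'_def)
  have s': "s' \<in> ball 0 \<rho>"
  proof -
    have "norm s' = norm s / norm q ^ K" by (simp add: s'_def norm_divide norm_power)
    also have "\<dots> < r / norm q ^ K" using s qK by (intro divide_strict_right_mono) auto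
    finally show ?thesis by (simp add: \<rho>_def)
  qed
  define V where "V k = \<Phi> (q ^ k)" for k
  have ET': "(\<lambda>m. an q a' m * Tn q a' V m * psi q a' m s') sums (qpoch_inf (a' * q) q * \<Phi> s')"
  proof -
    have Veq: "(\<lambda>k. \<Phi> (q ^ k)) = V" by (simp add: V_def fun_eq_iff)
    show ?thesis using ET[OF g' a1' \<Phi>holo \<rho>1 s'] unfolding Veq .
  qed
  define e where "e m = d (K + m) * q ^ (K * m)" for m
  have nodeball: "q ^ k \<in> ball 0 \<rho>" for k
  proof -
    have "norm q ^ k \<le> 1" by simp
    then have "norm q ^ k < \<rho>" using \<rho>1 by linarith
    then show ?thesis by (simp add: norm_power)
  qed
  have sysE: "(\<Sum>m\<le>k. e m * psi q a' m (q ^ k)) = (\<Sum>m\<le>k. (an q a' m * Tn q a' V m) * psi q a' m (q ^ k))" for k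
  proof -
    have qKk: "q ^ K * q ^ k = q ^ (K + k)" by (simp add: power_add)
    have kr: "norm q ^ (K + k) < r"
    proof -
      have "norm q ^ (K + k) \<le> norm q ^ K" using q1 by (intro power_decreasing) auto
      then show ?thesis using K by linarith
    qed
    have pnz: "phi q K (q ^ (K + k)) \<noteq> 0" using phinz[OF nodeball[of k]] qKk by simp
    have "(\<Sum>n\<le>K + k. d n * psi q a n (q ^ (K + k))) = qpoch_inf (a * q) q * B (K + k)"
      unfolding d_def by (rule S1_all[OF a1])
    also have "\<dots> = R (q ^ (K + k))" using nodes[OF kr] by simp
    finally have A: "(\<Sum>n<K. d n * psi q a n (q ^ (K + k))) + (\<Sum>m\<le>k. d (K + m) * psi q a (K + m) (q ^ (K + k))) = R (q ^ (K + k))"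
      unfolding sum_split_at .
    have B: "d (K + m) * psi q a (K + m) (q ^ (K + k)) = phi q K (q ^ (K + k)) * (e m * psi q a' m (q ^ k))" for m
    proof -
      have "q ^ (K + k) / q ^ K = q ^ k" using qK by (simp add: power_add)
      then show ?thesis unfolding psi_shift[of a K m] e_def a'_def by (simp add: mult_ac)
    qed
    have "(\<Sum>m\<le>k. e m * psi q a' m (q ^ k)) = (R (q ^ (K + k)) - (\<Sum>n<K. d n * psi q a n (q ^ (K + k)))) / phi q K (q ^ (K + k))"
      using A pnz unfolding B sum_distrib_left[symmetric] by (simp add: field_simps)
    also have "\<dots> = qpoch_inf (a' * q) q * V k"
      unfolding V_def \<Phi>_def qKk using pnz P'nz by (simp add: field_simps)
    also have "\<dots> = (\<Sum>m\<le>k. (an q a' m * Tn q a' V m) * psi q a' m (q ^ k))"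
      by (rule S1_all[OF a1', symmetric])
    finally show ?thesis .
  qed
  have diag: "psi q a' k (q ^ k) \<noteq> 0" for k
  proof -
    have "qpoch_inf (a' * q ^ Suc k * q ^ k) q \<noteq> 0"
    proof (rule P_nonzero)
      fix i show "a' * q ^ Suc k * q ^ k * q ^ i \<noteq> 1"
        using g' unfolding good_def by (metis mult.assoc power_add zero_less_Suc add_gr_0)
    qed
    then show ?thesis using phi_diag_nz[of k] by (simp add: psi_def)
  qed
  have eq: "e m = an q a' m * Tn q a' V m" for m
    by (rule tri_unique[where D = "\<lambda>m k. psi q a' m (q ^ k)", OF sysE diag])
  have tail: "(\<lambda>m. d (m + K) * psi q a (m + K) s) sums (phi q K s * (qpoch_inf (a' * q) q * \<Phi> s'))"
  proof -
    have "d (m + K) * psi q a (m + K) s = phi q K s * (an q a' m * Tn q a' V m * psi q a' m s')" for m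
    proof -
      have "psi q a (K + m) s = phi q K s * q ^ (K * m) * psi q a' m s'"
        by (simp add: psi_shift a'_def s'_def)
      then have "d (K + m) * psi q a (K + m) s = phi q K s * (e m * psi q a' m s')"
        by (simp add: e_def mult_ac)
      then show ?thesis by (simp add: eq add.commute)
    qed
    then show ?thesis using sums_mult[OF ET', of "phi q K s"] by simp
  qed
  then have "(\<lambda>n. d n * psi q a n s) sums (phi q K s * (qpoch_inf (a' * q) q * \<Phi> s') + (\<Sum>n<K. d n * psi q a n s))"
    by (subst (asm) sums_iff_shift)
  moreover have "phi q K s * (qpoch_inf (a' * q) q * \<Phi> s') + (\<Sum>n<K. d n * psi q a n s) = R s"
    using phinz[OF s'] P'nz unfolding \<Phi>_def sK by (simp add: field_simps)
  ultimately show ?thesis by (simp add: d_def)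
qed

lemma CORE:
  assumes a1: "a \<noteq> 1" and holo: "R holomorphic_on ball 0 r" and r0: "0 < r"
    and nodes: "\<And>k. norm q ^ k < r \<Longrightarrow> R (q ^ k) = qpoch_inf (a * q) q * B k"
    and s: "s \<in> ball 0 r"
  shows "(\<lambda>n. an q a n * Tn q a B n * psi q a n s) sums R s"
  using CORE_good[OF _ a1 holo r0 nodes s] CORE_bad[OF a1 _ holo r0 nodes s] by blast

end


lemma aux_lt:
  fixes p d :: real assumes "0 \<le> p" "0 < d"
  shows "p * (d / (p + 1)) < d"
proof -
  have "p / (p + 1) < 1" using assms by simp
  then have "d * (p / (p + 1)) < d * 1" using assms by (intro mult_strict_left_mono) auto
  then show ?thesis by (simp add: mult_ac)
qed

theorem theorem4p1:
  fixes q \<alpha> a b c \<beta> \<gamma> :: complex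
  assumes "0 < norm q" and "norm q < 1"
    and "norm (\<alpha> * \<beta> * a * b * c / q^2) < 1"
    and "norm (\<alpha> * \<gamma> * a * b * c / q^2) < 1"
    and "\<alpha> \<noteq> 1" and "c \<noteq> 0"
    and "\<And>n. qpochs [q, \<alpha> * c] q n \<noteq> 0"
    and "\<And>n. qpochs [\<alpha> * a, \<alpha> * b, \<alpha> * \<beta> * \<gamma> * a * b / q] q n \<noteq> 0"
    and "qpochs_inf [\<alpha> * a, \<alpha> * b, \<alpha> * c, \<alpha> * \<beta> * a * b * c / q^2,
                     \<alpha> * \<gamma> * a * b * c / q^2, \<alpha> * \<beta> * \<gamma> * a * b / q] q \<noteq> 0"
  shows "(\<lambda>n. (1 - \<alpha> * q ^ (2 * n)) * qpochs [\<alpha>, q / c] q n * (c / q) ^ n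
              / ((1 - \<alpha>) * qpochs [q, \<alpha> * c] q n)
            * qphi [q powi (- int n), \<alpha> * q ^ n, \<alpha> * \<beta> * a * b / q, \<alpha> * \<gamma> * a * b / q]
                   [\<alpha> * a, \<alpha> * b, \<alpha> * \<beta> * \<gamma> * a * b / q] q q)
         sums (qpochs_inf [q * \<alpha>, \<alpha> * a * c / q, \<alpha> * b * c / q, \<alpha> * \<beta> * a * b / q,
                           \<alpha> * \<gamma> * a * b / q, \<alpha> * \<beta> * \<gamma> * a * b * c / q^2] q
               / qpochs_inf [\<alpha> * a, \<alpha> * b, \<alpha> * c, \<alpha> * \<beta> * a * b * c / q^2,
                           \<alpha> * \<gamma> * a * b * c / q^2, \<alpha> * \<beta> * \<gamma> * a * b / q] q)"
proof -
  interpret qctx q using assms(1,2) by unfold_locales auto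
  define x where "x = \<alpha> * \<beta> * a * b / q"
  define y where "y = \<alpha> * \<gamma> * a * b / q"
  define u where "u = \<alpha> * a"
  define v where "v = \<alpha> * b"
  define w where "w = \<alpha> * \<beta> * \<gamma> * a * b / q"
  define t where "t = c / q"
  define B where "B k = qpoch x q k * qpoch y q k / (qpoch u q k * qpoch v q k * qpoch w q k)" for k
  have a1: "\<alpha> \<noteq> 1" by (rule assms(5))
  have c0: "c \<noteq> 0" by (rule assms(6))
  have nzinf: "qpoch_inf (\<alpha> * a) q \<noteq> 0" "qpoch_inf (\<alpha> * b) q \<noteq> 0" "qpoch_inf (\<alpha> * c) q \<noteq> 0"
     "qpoch_inf (\<alpha> * \<beta> * \<gamma> * a * b / q) q \<noteq> 0"
    using assms(9) by (auto simp: qpochs_inf_def)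
  have nzfin: "qpoch u q k \<noteq> 0" "qpoch v q k \<noteq> 0" "qpoch w q k \<noteq> 0" for k
    using assms(8)[of k] by (auto simp: qpochs_def u_def v_def w_def)
  have nzac: "qpoch (\<alpha> * c) q n \<noteq> 0" for n
    using assms(7)[of n] by (auto simp: qpochs_def)
  have qphi_eq: "qphi [q powi (- int n), \<alpha> * q ^ n, \<alpha> * \<beta> * a * b / q, \<alpha> * \<gamma> * a * b / q]
                   [\<alpha> * a, \<alpha> * b, \<alpha> * \<beta> * \<gamma> * a * b / q] q q = Tn q \<alpha> B n" for n
  proof -
    define f where "f k = qpochs [q powi (- int n), \<alpha> * q ^ n, \<alpha> * \<beta> * a * b / q, \<alpha> * \<gamma> * a * b / q] q k /
        qpochs (q # [\<alpha> * a, \<alpha> * b, \<alpha> * \<beta> * \<gamma> * a * b / q]) q k *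
        ((-1) ^ k * q ^ (k * (k - 1) div 2)) powi (1 + int (length [\<alpha> * a, \<alpha> * b, \<alpha> * \<beta> * \<gamma> * a * b / q]) -
           int (length [q powi (- int n), \<alpha> * q ^ n, \<alpha> * \<beta> * a * b / q, \<alpha> * \<gamma> * a * b / q])) * q ^ k" for k
    have fk: "f k = gk q \<alpha> n k * B k" for k
    proof -
      have "f k = qpoch (inverse (q ^ n)) q k * qpoch (\<alpha> * q ^ n) q k * qpoch x q k * qpoch y q k /
                  (qpoch q q k * qpoch u q k * qpoch v q k * qpoch w q k) * q ^ k"
        unfolding f_def qpochs_def by (simp add: x_def y_def u_def v_def w_def power_int_minus mult_ac)
      then show ?thesis unfolding gk_def B_def using qpoch_q_nz[of k] nzfin[of k]
        by (simp add: field_simps)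
    qed
    have "f sums (\<Sum>k\<le>n. f k)"
      by (rule sums_finite) (auto simp: fk gk_def qpoch_neg_zero)
    then have "qphi [q powi (- int n), \<alpha> * q ^ n, \<alpha> * \<beta> * a * b / q, \<alpha> * \<gamma> * a * b / q]
                   [\<alpha> * a, \<alpha> * b, \<alpha> * \<beta> * \<gamma> * a * b / q] q q = (\<Sum>k\<le>n. f k)"
      unfolding qphi_def f_def by (simp add: sums_iff)
    then show ?thesis by (simp add: fk Tn_def)
  qed
  have Psplit: "qpoch_inf (\<alpha> * c) q = qpoch (\<alpha> * c) q n * qpoch_inf (\<alpha> * q ^ Suc n * t) q" for n
  proof -
    have e: "\<alpha> * c * q ^ n = \<alpha> * q ^ Suc n * t" using q0 by (simp add: t_def field_simps)
    show ?thesis using P_split[of "\<alpha> * c" n] unfolding e .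
  qed
  have phit: "qpoch (q / c) q n * (c / q) ^ n = phi q n t" for n
  proof -
    have "(\<Prod>i<n. (1 - q / c * q ^ i) * (c / q)) = (\<Prod>i<n. 1 - q / c * q ^ i) * (\<Prod>i<n. c / q)"
      by (rule prod.distrib)
    also have "(\<Prod>i<n. c / q) = (c / q) ^ n" by simp
    finally have "qpoch (q / c) q n * (c / q) ^ n = (\<Prod>i<n. (1 - q / c * q ^ i) * (c / q))"
      by (simp add: qpoch_def)
    also have "\<dots> = (\<Prod>i<n. t - q ^ i)"
      using c0 q0 by (intro prod.cong refl) (simp add: t_def field_simps)
    finally show ?thesis by (simp add: phi_def)
  qed
  have term_eq: "(1 - \<alpha> * q ^ (2 * n)) * qpochs [\<alpha>, q / c] q n * (c / q) ^ n
              / ((1 - \<alpha>) * qpochs [q, \<alpha> * c] q n)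
            * qphi [q powi (- int n), \<alpha> * q ^ n, \<alpha> * \<beta> * a * b / q, \<alpha> * \<gamma> * a * b / q]
                   [\<alpha> * a, \<alpha> * b, \<alpha> * \<beta> * \<gamma> * a * b / q] q q
         = an q \<alpha> n * Tn q \<alpha> B n * psi q \<alpha> n t / qpoch_inf (\<alpha> * c) q" for n
  proof -
    have "(1 - \<alpha> * q ^ (2 * n)) * qpochs [\<alpha>, q / c] q n * (c / q) ^ n / ((1 - \<alpha>) * qpochs [q, \<alpha> * c] q n)
          = an q \<alpha> n * (phi q n t / qpoch (\<alpha> * c) q n)"
      unfolding qpochs_def an_def phit[symmetric] using a1 qpoch_q_nz[of n] nzac[of n]
      by (simp add: field_simps)
    also have "phi q n t / qpoch (\<alpha> * c) q n = psi q \<alpha> n t / qpoch_inf (\<alpha> * c) q"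
      unfolding psi_def Psplit[of n] using nzac[of n] nzinf(3) Psplit[of n]
      by (simp add: field_simps)
    finally show ?thesis unfolding qphi_eq by simp
  qed
  define R where "R s = qpoch_inf (\<alpha> * q) q * (qpoch_inf x q * qpoch_inf y q * qpoch_inf (u * s) q *
      qpoch_inf (v * s) q * qpoch_inf (w * s) q) / (qpoch_inf u q * qpoch_inf v q * qpoch_inf w q *
      qpoch_inf (x * s) q * qpoch_inf (y * s) q)" for s
  have xt: "norm (x * t) < 1" "norm (y * t) < 1"
    using assms(3,4) by (simp_all add: x_def y_def t_def power2_eq_square mult_ac)
  define \<delta> where "\<delta> = min ((1 - norm (x * t)) / (norm x + 1)) ((1 - norm (y * t)) / (norm y + 1))"
  have \<delta>0: "0 < \<delta>"
  proof -
    have n1: "0 < norm x + 1" "0 < norm y + 1" using norm_ge_zero[of x] norm_ge_zero[of y] by linarith+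
    have "0 < (1 - norm (x * t)) / (norm x + 1)" using xt n1 by (intro divide_pos_pos) auto
    moreover have "0 < (1 - norm (y * t)) / (norm y + 1)" using xt n1 by (intro divide_pos_pos) auto
    ultimately show ?thesis by (simp add: \<delta>_def)
  qed
  define r where "r = norm t + \<delta>"
  have r0: "0 < r" unfolding r_def using \<delta>0 norm_ge_zero[of t] by linarith
  have tr: "t \<in> ball 0 r" using \<delta>0 by (simp add: r_def)
  have xs: "norm (x * s) < 1" "norm (y * s) < 1" if "norm s < r" for s
  proof -
    have "norm (x * s) \<le> norm x * r" using that by (simp add: norm_mult mult_left_mono)
    also have "\<dots> = norm (x * t) + norm x * \<delta>" by (simp add: r_def norm_mult algebra_simps)
    also have "norm x * \<delta> \<le> norm x * ((1 - norm (x * t)) / (norm x + 1))"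
      by (intro mult_left_mono) (auto simp: \<delta>_def)
    also have "\<dots> < 1 - norm (x * t)"
      using xt by (intro aux_lt) auto
    finally show "norm (x * s) < 1" by simp
    have "norm (y * s) \<le> norm y * r" using that by (simp add: norm_mult mult_left_mono)
    also have "\<dots> = norm (y * t) + norm y * \<delta>" by (simp add: r_def norm_mult algebra_simps)
    also have "norm y * \<delta> \<le> norm y * ((1 - norm (y * t)) / (norm y + 1))"
      by (intro mult_left_mono) (auto simp: \<delta>_def)
    also have "\<dots> < 1 - norm (y * t)"
      using xt by (intro aux_lt) auto
    finally show "norm (y * s) < 1" by simp
  qed
  have Rholo: "R holomorphic_on ball 0 r"
    unfolding R_def
    by (intro holomorphic_intros) (use xs P_nonzero_small nzinf in \<open>auto simp: u_def v_def w_def\<close>)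
  have nodes: "R (q ^ k) = qpoch_inf (\<alpha> * q) q * B k" if "norm q ^ k < r" for k
  proof -
    have nx: "qpoch_inf (x * q ^ k) q \<noteq> 0" "qpoch_inf (y * q ^ k) q \<noteq> 0"
      using xs[of "q ^ k"] that P_nonzero_small by (auto simp: norm_power)
    have "qpoch_inf x q = qpoch x q k * qpoch_inf (x * q ^ k) q"
         "qpoch_inf y q = qpoch y q k * qpoch_inf (y * q ^ k) q"
         "qpoch_inf u q = qpoch u q k * qpoch_inf (u * q ^ k) q"
         "qpoch_inf v q = qpoch v q k * qpoch_inf (v * q ^ k) q"
         "qpoch_inf w q = qpoch w q k * qpoch_inf (w * q ^ k) q"
      by (rule P_split)+
    moreover have "qpoch_inf (u * q ^ k) q \<noteq> 0" "qpoch_inf (v * q ^ k) q \<noteq> 0" "qpoch_inf (w * q ^ k) q \<noteq> 0"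
      using nzinf P_split[of u k] P_split[of v k] P_split[of w k] by (auto simp: u_def v_def w_def)
    ultimately show ?thesis using nx nzfin[of k]
      unfolding R_def B_def by (simp add: field_simps)
  qed
  have core: "(\<lambda>n. an q \<alpha> n * Tn q \<alpha> B n * psi q \<alpha> n t) sums R t"
    by (rule CORE[OF a1 Rholo r0 nodes tr])
  have "(\<lambda>n. an q \<alpha> n * Tn q \<alpha> B n * psi q \<alpha> n t / qpoch_inf (\<alpha> * c) q) sums (R t / qpoch_inf (\<alpha> * c) q)"
    by (rule sums_divide[OF core])
  moreover have "R t / qpoch_inf (\<alpha> * c) q =
      qpochs_inf [q * \<alpha>, \<alpha> * a * c / q, \<alpha> * b * c / q, \<alpha> * \<beta> * a * b / q,
                           \<alpha> * \<gamma> * a * b / q, \<alpha> * \<beta> * \<gamma> * a * b * c / q^2] q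
               / qpochs_inf [\<alpha> * a, \<alpha> * b, \<alpha> * c, \<alpha> * \<beta> * a * b * c / q^2,
                           \<alpha> * \<gamma> * a * b * c / q^2, \<alpha> * \<beta> * \<gamma> * a * b / q] q"
  proof -
    have e: "\<alpha> * q = q * \<alpha>" "u * t = \<alpha> * a * c / q" "v * t = \<alpha> * b * c / q"
       "w * t = \<alpha> * \<beta> * \<gamma> * a * b * c / q^2" "x * t = \<alpha> * \<beta> * a * b * c / q^2"
       "y * t = \<alpha> * \<gamma> * a * b * c / q^2"
      by (simp_all add: u_def v_def w_def x_def y_def t_def power2_eq_square mult_ac)
    show ?thesis unfolding R_def e qpochs_inf_def
      by (simp add: x_def y_def u_def v_def w_def field_simps)
  qed
  ultimately show ?thesis using term_eq by simp
qed


end
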